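(* Let $\Gamma=\{\boldsymbol\theta=(\theta_1,\theta_2,\dots)\in\mathbb{R}^{\infty}: \sum_{i\ge 1} i\,|\theta_i|\le 1\}$. Then $n_{\mathrm{est}}(\Gamma,\epsilon)=\tilde\Theta(\epsilon^{-8/3})$, i.e. there exist constants $c,C>0$ and $k\ge 0$ such that for all sufficiently small $\epsilon>0$, $$c\,\epsilon^{-8/3}\log^{-k}(1/\epsilon)\le n_{\mathrm{est}}(\Gamma,\epsilon)\le C\,\epsilon^{-8/3}\log^{k}(1/\epsilon).$$
   Context: Gaussian sequence model: for $D\in[1,\infty]$ and $\Gamma\subseteq\mathbb{R}^D$, the model is $\{\mathcal N(\boldsymbol\theta,I_D):\boldsymbol\theta\in\Gamma\}$ (for $D=\infty$, $I_\infty$ is the identity covariance, i.e. independent unit-variance coordinates). The density estimation sample complexity $n_{\mathrm{est}}(\Gamma,\epsilon)$ is the smallest integer $n$ such that, given $n$ i.i.d. samples $\mathbf X=(\mathbf X_1,\dots,\mathbf X_n)$ from $\mathcal N(\boldsymbol\theta,I_D)$, there is an estimator $\hat{\boldsymbol\theta}(\mathbf X)$ with $\sup_{\boldsymbol\theta\in\Gamma}\mathbb E\|\hat{\boldsymbol\theta}(\mathbf X)-\boldsymbol\theta\|_2^2\le\epsilon^2$. *)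

theory Defs
  imports "HOL-Probability.Probability"
begin

text \<open>Sequences in R^infinity are functions nat => real; coordinate i (0-based)
  corresponds to coordinate i+1 of the paper.  A sample of size n is a function
  on {..<n} x UNIV: X (j,i) is coordinate i of the j-th observation.\<close>

definition sample_space :: "nat \<Rightarrow> (nat \<times> nat \<Rightarrow> real) measure" where
  "sample_space n = PiM ({..<n} \<times> UNIV) (\<lambda>_. lborel)"

definition sample_dist :: "nat \<Rightarrow> (nat \<Rightarrow> real) \<Rightarrow> (nat \<times> nat \<Rightarrow> real) measure" where
  "sample_dist n \<theta> = PiM ({..<n} \<times> UNIV)
      (\<lambda>ji. density lborel (normal_density (\<theta> (snd ji)) 1))"

definition risk :: "nat \<Rightarrow> ((nat \<times> nat \<Rightarrow> real) \<Rightarrow> nat \<Rightarrow> real) \<Rightarrow> (nat \<Rightarrow> real) \<Rightarrow> ennreal" where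
  "risk n est \<theta> = (\<integral>\<^sup>+ X. (\<Sum>i. ennreal ((est X i - \<theta> i)\<^sup>2)) \<partial>sample_dist n \<theta>)"

definition achievable :: "(nat \<Rightarrow> real) set \<Rightarrow> real \<Rightarrow> nat \<Rightarrow> bool" where
  "achievable \<Gamma> \<epsilon> n \<longleftrightarrow>
     (\<exists>est. (\<forall>i. (\<lambda>X. est X i) \<in> borel_measurable (sample_space n)) \<and>
            (\<forall>\<theta>\<in>\<Gamma>. risk n est \<theta> \<le> ennreal (\<epsilon>\<^sup>2)))"

definition n_est :: "(nat \<Rightarrow> real) set \<Rightarrow> real \<Rightarrow> nat" where
  "n_est \<Gamma> \<epsilon> = (LEAST n. achievable \<Gamma> \<epsilon> n)"

definition Gamma_weighted :: "(nat \<Rightarrow> real) set" where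
  "Gamma_weighted = {\<theta>. summable (\<lambda>i. real (i + 1) * \<bar>\<theta> i\<bar>) \<and>
                         (\<Sum>i. real (i + 1) * \<bar>\<theta> i\<bar>) \<le> 1}"

end

theory Submission
  imports Defs "HOL-Real_Asymp.Real_Asymp"
begin

definition Nm :: "(nat \<Rightarrow> real) \<Rightarrow> nat \<times> nat \<Rightarrow> real measure" where
  "Nm \<theta> = (\<lambda>ji. density lborel (normal_density (\<theta> (snd ji)) 1))"

lemma prob_Nm: "prob_space (Nm \<theta> k)"
  unfolding Nm_def by (rule prob_space_normal_density) simp

lemma pps_Nm: "product_prob_space (Nm \<theta>)"
  by (rule product_prob_spaceI, rule prob_Nm)

lemma sample_dist_Nm: "sample_dist n \<theta> = PiM ({..<n} \<times> UNIV) (Nm \<theta>)"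
  unfolding sample_dist_def Nm_def by simp

lemma sets_Nm[simp]: "sets (Nm \<theta> k) = sets borel"
  unfolding Nm_def by simp

lemma sets_sample_dist: "sets (sample_dist n \<theta>) = sets (sample_space n)"
  unfolding sample_dist_def sample_space_def by (intro sets_PiM_cong) auto

lemma T1:
  fixes f :: "nat \<times> nat \<Rightarrow> real \<Rightarrow> ennreal"
  assumes K: "finite K" "K \<subseteq> {..<n} \<times> UNIV" and f: "\<And>k. k \<in> K \<Longrightarrow> f k \<in> borel_measurable borel"
  shows "(\<integral>\<^sup>+ X. (\<Prod>k\<in>K. f k (X k)) \<partial>sample_dist n \<theta>) = (\<Prod>k\<in>K. \<integral>\<^sup>+ x. f k x \<partial>Nm \<theta> k)"
proof -
  interpret product_prob_space "Nm \<theta>" "{..<n} \<times> UNIV" by (rule pps_Nm)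
  have fm: "\<And>k. k \<in> K \<Longrightarrow> f k \<in> borel_measurable (Nm \<theta> k)"
  proof -
    fix k assume k: "k \<in> K"
    have eq: "borel_measurable (Nm \<theta> k) = borel_measurable (borel::real measure)"
      by (rule measurable_cong_sets) simp_all
    show "f k \<in> borel_measurable (Nm \<theta> k)" unfolding eq by (rule f[OF k])
  qed
  have m: "(\<lambda>Y. \<Prod>k\<in>K. f k (Y k)) \<in> borel_measurable (PiM K (Nm \<theta>))"
  proof (rule borel_measurable_prod_ennreal)
    fix k assume k: "k \<in> K"
    show "(\<lambda>Y. f k (Y k)) \<in> borel_measurable (PiM K (Nm \<theta>))"
      using measurable_component_singleton[OF k, of "Nm \<theta>"] fm[OF k] by (rule measurable_compose)
  qed
  have "(\<integral>\<^sup>+ X. (\<Prod>k\<in>K. f k (X k)) \<partial>sample_dist n \<theta>)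
      = (\<integral>\<^sup>+ X. (\<Prod>k\<in>K. f k (restrict X K k)) \<partial>PiM ({..<n} \<times> UNIV) (Nm \<theta>))"
    unfolding sample_dist_Nm by (intro nn_integral_cong prod.cong) auto
  also have "\<dots> = (\<integral>\<^sup>+ Y. (\<Prod>k\<in>K. f k (Y k)) \<partial>distr (PiM ({..<n} \<times> UNIV) (Nm \<theta>)) (PiM K (Nm \<theta>)) (\<lambda>X. restrict X K))"
  proof (rule nn_integral_distr[symmetric])
    show "(\<lambda>X. restrict X K) \<in> measurable (PiM ({..<n} \<times> UNIV) (Nm \<theta>)) (PiM K (Nm \<theta>))"
      using K by (intro measurable_restrict_subset) auto
  qed (use m in simp)
  also have "\<dots> = (\<integral>\<^sup>+ Y. (\<Prod>k\<in>K. f k (Y k)) \<partial>PiM K (Nm \<theta>))"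
    using K by (simp add: distr_PiM_restrict_finite)
  also have "\<dots> = (\<Prod>k\<in>K. \<integral>\<^sup>+ x. f k x \<partial>Nm \<theta> k)"
    using K fm by (intro product_nn_integral_prod) auto
  finally show ?thesis .
qed

lemma G: "normal_density a 1 x * exp ((b - a) * x - (b\<^sup>2 - a\<^sup>2) / 2) = normal_density b 1 x"
proof -
  have "-(x - a)\<^sup>2 / 2 + ((b - a) * x - (b\<^sup>2 - a\<^sup>2) / 2) = -(x - b)\<^sup>2 / 2"
    by (simp add: power2_eq_square field_simps)
  then have "exp (-(x - a)\<^sup>2 / 2) * exp ((b - a) * x - (b\<^sup>2 - a\<^sup>2) / 2) = exp (-(x - b)\<^sup>2 / 2)"
    by (metis exp_add)
  then show ?thesis unfolding normal_density_def by simp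
qed

lemma nn_normal_one: "(\<integral>\<^sup>+ x. ennreal (normal_density b 1 x) \<partial>lborel) = 1"
proof -
  interpret prob_space "density lborel (normal_density b 1)"
    by (rule prob_space_normal_density) simp
  have "emeasure (density lborel (normal_density b 1)) UNIV = 1"
    using emeasure_space_1 by simp
  then show ?thesis by (simp add: emeasure_density)
qed

lemma dens_shift:
  assumes A: "A \<in> sets borel"
  shows "(\<integral>\<^sup>+ x. ennreal (exp ((b - a) * x - (b\<^sup>2 - a\<^sup>2) / 2)) * indicator A x \<partial>density lborel (normal_density a 1))
     = emeasure (density lborel (normal_density b 1)) A"
proof -
  have "(\<integral>\<^sup>+ x. ennreal (exp ((b - a) * x - (b\<^sup>2 - a\<^sup>2) / 2)) * indicator A x \<partial>density lborel (normal_density a 1))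
     = (\<integral>\<^sup>+ x. ennreal (normal_density a 1 x) * (ennreal (exp ((b - a) * x - (b\<^sup>2 - a\<^sup>2) / 2)) * indicator A x) \<partial>lborel)"
    using A by (intro nn_integral_density) auto
  also have "\<dots> = (\<integral>\<^sup>+ x. ennreal (normal_density b 1 x) * indicator A x \<partial>lborel)"
  proof (intro nn_integral_cong)
    fix x
    have "ennreal (normal_density a 1 x) * ennreal (exp ((b - a) * x - (b\<^sup>2 - a\<^sup>2) / 2)) = ennreal (normal_density b 1 x)"
      by (subst ennreal_mult'[symmetric]) (auto simp: G normal_density_nonneg)
    then show "ennreal (normal_density a 1 x) * (ennreal (exp ((b - a) * x - (b\<^sup>2 - a\<^sup>2) / 2)) * indicator A x) = ennreal (normal_density b 1 x) * indicator A x"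
      by (simp add: mult.assoc[symmetric])
  qed
  also have "\<dots> = emeasure (density lborel (normal_density b 1)) A"
    using A by (simp add: emeasure_density)
  finally show ?thesis .
qed

lemma mgf1: "(\<integral>\<^sup>+ x. ennreal (exp (l * (x - a))) \<partial>density lborel (normal_density a 1)) = ennreal (exp (l\<^sup>2 / 2))"
proof -
  interpret prob_space "density lborel (normal_density (a + l) 1)"
    by (rule prob_space_normal_density) simp
  have e: "exp (l * (x - a)) = exp (l\<^sup>2 / 2) * exp ((a + l - a) * x - ((a + l)\<^sup>2 - a\<^sup>2) / 2)" for x
    by (simp add: exp_add[symmetric] power2_eq_square algebra_simps)
  have "(\<integral>\<^sup>+ x. ennreal (exp (l * (x - a))) \<partial>density lborel (normal_density a 1))
      = (\<integral>\<^sup>+ x. ennreal (exp (l\<^sup>2 / 2)) * (ennreal (exp ((a + l - a) * x - ((a + l)\<^sup>2 - a\<^sup>2) / 2)) * indicator UNIV x) \<partial>density lborel (normal_density a 1))"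
    by (intro nn_integral_cong) (simp add: e ennreal_mult')
  also have "\<dots> = ennreal (exp (l\<^sup>2 / 2)) * (\<integral>\<^sup>+ x. ennreal (exp ((a + l - a) * x - ((a + l)\<^sup>2 - a\<^sup>2) / 2)) * indicator UNIV x \<partial>density lborel (normal_density a 1))"
    by (intro nn_integral_cmult) simp
  also have "\<dots> = ennreal (exp (l\<^sup>2 / 2))"
    by (subst dens_shift) (simp_all add: emeasure_space_1[simplified])
  finally show ?thesis .
qed

definition colsum :: "nat \<Rightarrow> nat \<Rightarrow> (nat \<times> nat \<Rightarrow> real) \<Rightarrow> real" where
  "colsum n i X = (\<Sum>j<n. X (j, i))"

lemma colsum_meas[measurable]: "colsum n i \<in> borel_measurable (sample_dist n \<theta>)"
proof -
  have "(\<lambda>X. X (j, i)) \<in> borel_measurable (sample_dist n \<theta>)" if "j < n" for j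
  proof -
    have eq: "measurable (sample_dist n \<theta>) (Nm \<theta> (j, i)) = borel_measurable (sample_dist n \<theta>)"
      by (rule measurable_cong_sets) simp_all
    show ?thesis unfolding eq[symmetric] unfolding sample_dist_Nm
      using that by (intro measurable_component_singleton) auto
  qed
  then show ?thesis unfolding colsum_def by (intro borel_measurable_sum) auto
qed

lemma mgf_col:
  "(\<integral>\<^sup>+ X. ennreal (exp (l * (colsum n i X - real n * \<theta> i))) \<partial>sample_dist n \<theta>) = ennreal (exp (real n * l\<^sup>2 / 2))"
proof -
  let ?K = "(\<lambda>j. (j, i)) ` {..<n}"
  have inj: "inj_on (\<lambda>j. (j, i)) {..<n}" by (auto simp: inj_on_def)
  have "(\<integral>\<^sup>+ X. ennreal (exp (l * (colsum n i X - real n * \<theta> i))) \<partial>sample_dist n \<theta>)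
      = (\<integral>\<^sup>+ X. (\<Prod>k\<in>?K. ennreal (exp (l * (X k - \<theta> i)))) \<partial>sample_dist n \<theta>)"
  proof (intro nn_integral_cong)
    fix X :: "nat \<times> nat \<Rightarrow> real"
    have "l * (colsum n i X - real n * \<theta> i) = (\<Sum>j<n. l * (X (j, i) - \<theta> i))"
      unfolding colsum_def by (simp add: sum_distrib_left sum_subtractf algebra_simps)
    then have "exp (l * (colsum n i X - real n * \<theta> i)) = (\<Prod>j<n. exp (l * (X (j, i) - \<theta> i)))"
      by (simp add: exp_sum)
    then show "ennreal (exp (l * (colsum n i X - real n * \<theta> i))) = (\<Prod>k\<in>?K. ennreal (exp (l * (X k - \<theta> i))))"
      by (simp add: prod.reindex[OF inj] prod_ennreal)
  qed
  also have "\<dots> = (\<Prod>k\<in>?K. \<integral>\<^sup>+ x. ennreal (exp (l * (x - \<theta> i))) \<partial>Nm \<theta> k)"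
    by (intro T1) auto
  also have "\<dots> = (\<Prod>j<n. ennreal (exp (l\<^sup>2 / 2)))"
    by (simp add: prod.reindex[OF inj] Nm_def mgf1)
  also have "\<dots> = ennreal (exp (real n * l\<^sup>2 / 2))"
    using exp_of_nat_mult[of n "l\<^sup>2 / 2"] by (simp add: ennreal_power)
  finally show ?thesis .
qed

lemma sets_sample_dist_PiM: "sets (sample_dist n \<theta>) = sets (PiM ({..<n} \<times> UNIV) (Nm \<theta>'))"
  unfolding sample_dist_Nm by (intro sets_PiM_cong) auto

lemma prod_if_sub: "finite A \<Longrightarrow> B \<subseteq> A \<Longrightarrow> (\<Prod>k\<in>A. if k \<in> B then f k else 1) = prod f B"
  by (metis prod.inter_restrict Int_absorb1 Int_commute)

lemma density_lemma:
  shows "sample_dist n (\<theta>(i := b)) = density (sample_dist n \<theta>) (\<lambda>X. ennreal (exp ((b - \<theta> i) * colsum n i X - real n * (b\<^sup>2 - (\<theta> i)\<^sup>2) / 2)))"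
    (is "_ = density _ ?L")
proof -
  define L where "L = ?L"
  define a where "a = \<theta> i"
  define \<theta>' where "\<theta>' = \<theta>(i := b)"
  define I where "I = {..<n} \<times> (UNIV :: nat set)"
  define C where "C = (\<lambda>j. (j, i)) ` {..<n}"
  define e where "e = (\<lambda>x. ennreal (exp ((b - a) * x - (b\<^sup>2 - a\<^sup>2) / 2)))"
  have inj: "inj_on (\<lambda>j. (j, i)) {..<n}" by (auto simp: inj_on_def)
  have CI: "C \<subseteq> I" "finite C" unfolding C_def I_def by auto
  interpret P': product_prob_space "Nm \<theta>'" I by (rule pps_Nm)
  have Lm: "L \<in> borel_measurable (sample_dist n \<theta>)"
    unfolding L_def by measurable
  have LX: "L X = (\<Prod>k\<in>C. e (X k))" for X
  proof -
    have "(b - a) * colsum n i X - real n * (b\<^sup>2 - a\<^sup>2) / 2 = (\<Sum>j<n. (b - a) * X (j, i) - (b\<^sup>2 - a\<^sup>2) / 2)"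
      unfolding colsum_def by (simp add: sum_distrib_left sum_subtractf)
    then show ?thesis unfolding L_def e_def a_def[symmetric] C_def
      by (simp add: prod.reindex[OF inj] exp_sum prod_ennreal)
  qed
  have "density (sample_dist n \<theta>) L = PiM I (Nm \<theta>')"
  proof (rule P'.PiM_eq)
    show "sets (density (sample_dist n \<theta>) L) = sets (PiM I (Nm \<theta>'))"
      unfolding I_def by (simp add: sets_sample_dist_PiM)
  next
    fix J F assume J: "finite J" "J \<subseteq> I" and F: "\<And>j. j \<in> J \<Longrightarrow> F j \<in> sets (Nm \<theta>' j)"
    let ?A = "prod_emb I (Nm \<theta>') J (Pi\<^sub>E J F)"
    have Fb: "\<And>j. j \<in> J \<Longrightarrow> F j \<in> sets borel" using F by simp
    have As: "?A \<in> sets (sample_dist n \<theta>)"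
      unfolding sets_sample_dist_PiM[of n \<theta> \<theta>'] I_def[symmetric]
      using J F by (intro sets_PiM_I) auto
    define g where "g = (\<lambda>k x. (if k \<in> J then indicator (F k) x else 1) * (if k \<in> C then e x else (1::ennreal)))"
    have ind: "indicator ?A X = (\<Prod>k\<in>J. indicator (F k) (X k) :: ennreal)" if X: "X \<in> space (sample_dist n \<theta>)" for X
    proof -
      have Xs: "X \<in> space (PiM I (Nm \<theta>'))"
        using X sets_eq_imp_space_eq[OF sets_sample_dist_PiM[of n \<theta> \<theta>']] unfolding I_def by simp
      have "X \<in> ?A \<longleftrightarrow> (\<forall>k\<in>J. X k \<in> F k)"
        using Xs J by (auto simp: prod_emb_def PiE_iff space_PiM)
      show ?thesis
      proof (cases "\<forall>k\<in>J. X k \<in> F k")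
        case True
        then show ?thesis using \<open>X \<in> ?A \<longleftrightarrow> _\<close> by (simp add: indicator_def)
      next
        case False
        then obtain k where "k \<in> J" "X k \<notin> F k" by auto
        then have "(\<Prod>k\<in>J. indicator (F k) (X k) :: ennreal) = 0"
          using J(1) by (intro prod_zero) (auto intro!: bexI[of _ k])
        then show ?thesis using \<open>X \<in> ?A \<longleftrightarrow> _\<close> False by simp
      qed
    qed
    have "emeasure (density (sample_dist n \<theta>) L) ?A = (\<integral>\<^sup>+ X. L X * indicator ?A X \<partial>sample_dist n \<theta>)"
      using As Lm by (simp add: emeasure_density)
    also have "\<dots> = (\<integral>\<^sup>+ X. (\<Prod>k\<in>J \<union> C. g k (X k)) \<partial>sample_dist n \<theta>)"
    proof (intro nn_integral_cong)
      fix X assume X: "X \<in> space (sample_dist n \<theta>)"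
      have "(\<Prod>k\<in>J \<union> C. g k (X k)) = (\<Prod>k\<in>J \<union> C. (if k \<in> J then indicator (F k) (X k) else 1)) * (\<Prod>k\<in>J \<union> C. (if k \<in> C then e (X k) else 1))"
        unfolding g_def by (rule prod.distrib)
      also have "\<dots> = (\<Prod>k\<in>J. indicator (F k) (X k)) * (\<Prod>k\<in>C. e (X k))"
        using J CI by (simp add: prod_if_sub)
      also have "\<dots> = indicator ?A X * L X"
        by (simp add: ind[OF X] LX)
      finally show "L X * indicator ?A X = (\<Prod>k\<in>J \<union> C. g k (X k))" by (simp add: mult.commute)
    qed
    also have "\<dots> = (\<Prod>k\<in>J \<union> C. \<integral>\<^sup>+ x. g k x \<partial>Nm \<theta> k)"
    proof (intro T1)
      fix k assume k: "k \<in> J \<union> C"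
      show "g k \<in> borel_measurable borel"
      proof (cases "k \<in> J")
        case True
        have [measurable]: "F k \<in> sets borel" using Fb True by simp
        show ?thesis using True unfolding g_def e_def by (cases "k \<in> C") simp_all
      next
        case False
        show ?thesis using False unfolding g_def e_def by (cases "k \<in> C") simp_all
      qed
    qed (use J CI in \<open>auto simp: I_def\<close>)
    also have "\<dots> = (\<Prod>k\<in>J \<union> C. (if k \<in> J then emeasure (Nm \<theta>' k) (F k) else 1))"
    proof (intro prod.cong refl)
      fix k assume k: "k \<in> J \<union> C"
      show "(\<integral>\<^sup>+ x. g k x \<partial>Nm \<theta> k) = (if k \<in> J then emeasure (Nm \<theta>' k) (F k) else 1)"
      proof (cases "k \<in> C")
        case True
        then have ski: "snd k = i" unfolding C_def by auto
        define A where "A = (if k \<in> J then F k else UNIV)"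
        have Ab: "A \<in> sets borel" unfolding A_def using Fb by auto
        have "(\<integral>\<^sup>+ x. g k x \<partial>Nm \<theta> k) = (\<integral>\<^sup>+ x. e x * indicator A x \<partial>density lborel (normal_density a 1))"
        proof -
          have eq: "Nm \<theta> k = density lborel (normal_density a 1)" unfolding Nm_def using ski a_def by simp
          show ?thesis unfolding eq g_def A_def using True by (intro nn_integral_cong) (auto simp: mult.commute)
        qed
        also have "\<dots> = emeasure (density lborel (normal_density b 1)) A"
          unfolding e_def using Ab by (rule dens_shift)
        also have "\<dots> = (if k \<in> J then emeasure (Nm \<theta>' k) (F k) else 1)"
        proof -
          interpret prob_space "density lborel (normal_density b 1)"
            by (rule prob_space_normal_density) simp
          show ?thesis unfolding A_def Nm_def \<theta>'_def using ski
            using emeasure_space_1 by auto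
        qed
        finally show ?thesis .
      next
        case False
        then have kJ: "k \<in> J" using k by auto
        have ski: "snd k \<noteq> i"
          using False kJ J unfolding C_def I_def by (cases k) auto
        have "(\<integral>\<^sup>+ x. g k x \<partial>Nm \<theta> k) = (\<integral>\<^sup>+ x. indicator (F k) x \<partial>Nm \<theta> k)"
          unfolding g_def using False kJ by simp
        also have "\<dots> = emeasure (Nm \<theta> k) (F k)"
          using Fb[OF kJ] by simp
        also have "\<dots> = emeasure (Nm \<theta>' k) (F k)"
          unfolding Nm_def \<theta>'_def using ski by simp
        finally show ?thesis using kJ by simp
      qed
    qed
    also have "\<dots> = (\<Prod>k\<in>J. emeasure (Nm \<theta>' k) (F k))"
      using J CI by (simp add: prod_if_sub)
    finally show "emeasure (density (sample_dist n \<theta>) L) ?A = (\<Prod>k\<in>J. emeasure (Nm \<theta>' k) (F k))" .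
  qed
  then show ?thesis unfolding sample_dist_Nm I_def \<theta>'_def L_def by simp
qed

lemma prob_sample_dist: "prob_space (sample_dist n \<theta>)"
  unfolding sample_dist_Nm by (rule prob_space_PiM) (rule prob_Nm)

lemma ennreal_lb_aux:
  fixes Q :: ennreal
  assumes "1 \<le> ennreal a * Q + ennreal c" "a > 0" "0 \<le> c" "c \<le> 1/2"
  shows "ennreal (1 / (2 * a)) \<le> Q"
proof (cases Q)
  case (real q)
  then have "ennreal 1 \<le> ennreal (a * q + c)"
    using assms by (simp add: ennreal_mult'[symmetric] ennreal_plus[symmetric] del: ennreal_plus)
  then have "1 \<le> a * q + c" using assms real by (subst (asm) ennreal_le_iff) auto
  then have "1 / (2 * a) \<le> q" using assms by (simp add: field_simps)
  then show ?thesis using real by simp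
qed simp

lemma Q_lb:
  assumes \<delta>: "\<delta> > 0" "real n * \<delta>\<^sup>2 \<le> 1/8" and \<theta>0: "\<theta>0 i = 0"
  shows "ennreal (1 / (2 * exp 1)) \<le> (\<integral>\<^sup>+ X. ennreal (exp (- \<delta> * \<bar>colsum n i X\<bar>)) \<partial>sample_dist n \<theta>0)"
proof -
  interpret prob_space "sample_dist n \<theta>0" by (rule prob_sample_dist)
  let ?Q = "(\<integral>\<^sup>+ X. ennreal (exp (- \<delta> * \<bar>colsum n i X\<bar>)) \<partial>sample_dist n \<theta>0)"
  have mg: "(\<integral>\<^sup>+ X. ennreal (exp (l * colsum n i X)) \<partial>sample_dist n \<theta>0) = ennreal (exp (real n * l\<^sup>2 / 2))" for l
    using mgf_col[where l=l and n=n and i=i and \<theta>=\<theta>0] \<theta>0 by simp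
  have pw: "1 \<le> exp 1 * exp (- \<delta> * \<bar>s\<bar>) + exp (-8) * (exp ((8 * \<delta>) * s) + exp ((- 8 * \<delta>) * s))" for s
  proof (cases "\<delta> * \<bar>s\<bar> \<le> 1")
    case True
    have "1 \<le> exp 1 * exp (- \<delta> * \<bar>s\<bar>)"
      using True by (simp add: exp_add[symmetric])
    moreover have "0 \<le> exp (-8) * (exp ((8 * \<delta>) * s) + exp ((- 8 * \<delta>) * s))" by simp
    ultimately show ?thesis by linarith
  next
    case False
    have "exp (8 * (\<delta> * \<bar>s\<bar>)) \<le> exp ((8 * \<delta>) * s) + exp ((- 8 * \<delta>) * s)"
      by (cases "s \<ge> 0") (auto simp: algebra_simps)
    moreover have "1 \<le> exp (-8) * exp (8 * (\<delta> * \<bar>s\<bar>))"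
      using False \<delta> by (simp add: exp_add[symmetric])
    moreover have "0 \<le> exp 1 * exp (- \<delta> * \<bar>s\<bar>)" by simp
    ultimately show ?thesis
      by (smt (verit) exp_gt_zero mult_left_mono)
  qed
  have "(1::ennreal) = (\<integral>\<^sup>+ X. 1 \<partial>sample_dist n \<theta>0)"
    by (simp add: emeasure_space_1)
  also have "\<dots> \<le> (\<integral>\<^sup>+ X. ennreal (exp 1) * ennreal (exp (- \<delta> * \<bar>colsum n i X\<bar>))
        + ennreal (exp (-8)) * (ennreal (exp ((8 * \<delta>) * colsum n i X)) + ennreal (exp ((- 8 * \<delta>) * colsum n i X))) \<partial>sample_dist n \<theta>0)"
  proof (intro nn_integral_mono)
    fix X
    show "1 \<le> ennreal (exp 1) * ennreal (exp (- \<delta> * \<bar>colsum n i X\<bar>))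
        + ennreal (exp (-8)) * (ennreal (exp ((8 * \<delta>) * colsum n i X)) + ennreal (exp ((- 8 * \<delta>) * colsum n i X)))"
      using pw[of "colsum n i X"]
      by (simp add: ennreal_mult'[symmetric] ennreal_plus[symmetric] del: ennreal_plus)
  qed
  also have "\<dots> = ennreal (exp 1) * ?Q + ennreal (exp (-8)) * (ennreal (exp (real n * (8 * \<delta>)\<^sup>2 / 2)) + ennreal (exp (real n * (- 8 * \<delta>)\<^sup>2 / 2)))"
    using mg[of "8 * \<delta>"] mg[of "- 8 * \<delta>"] by (simp add: nn_integral_add nn_integral_cmult)
  also have "\<dots> = ennreal (exp 1) * ?Q + ennreal (2 * exp (-8) * exp (32 * (real n * \<delta>\<^sup>2)))"
    by (simp add: ennreal_mult'[symmetric] ennreal_plus[symmetric] power2_eq_square algebra_simps del: ennreal_plus)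
  finally have 1: "1 \<le> ennreal (exp 1) * ?Q + ennreal (2 * exp (-8) * exp (32 * (real n * \<delta>\<^sup>2)))" .
  have "2 * exp (-8) * exp (32 * (real n * \<delta>\<^sup>2)) \<le> 2 * exp (-8) * exp 4"
    using \<delta> by simp
  also have "\<dots> = 2 / exp 4"
    by (simp add: exp_add[symmetric] exp_minus field_simps)
  also have "\<dots> \<le> 1/2"
  proof -
    have "1 + 4 \<le> exp (4::real)" by (rule exp_ge_add_one_self)
    then show ?thesis by (simp add: field_simps)
  qed
  finally show ?thesis
    by (intro ennreal_lb_aux[OF 1]) auto
qed

lemma pair_lb:
  fixes g :: "(nat \<times> nat \<Rightarrow> real) \<Rightarrow> real"
  assumes gm: "g \<in> borel_measurable (sample_space n)" and \<delta>: "\<delta> > 0" "real n * \<delta>\<^sup>2 \<le> 1/8"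
    and \<theta>0: "\<theta>0 i = 0"
  shows "ennreal (\<delta>\<^sup>2 / 16) \<le> (\<integral>\<^sup>+ X. ennreal ((g X - \<delta>)\<^sup>2) \<partial>sample_dist n (\<theta>0(i := \<delta>)))
      + (\<integral>\<^sup>+ X. ennreal ((g X + \<delta>)\<^sup>2) \<partial>sample_dist n (\<theta>0(i := -\<delta>)))"
proof -
  have gm': "g \<in> borel_measurable (sample_dist n \<theta>0)"
    using gm by (simp add: measurable_cong_sets[OF sets_sample_dist refl])
  let ?c = "real n * \<delta>\<^sup>2 / 2"
  define Lp where "Lp = (\<lambda>X. ennreal (exp (\<delta> * colsum n i X - ?c)))"
  define Lm where "Lm = (\<lambda>X. ennreal (exp (- \<delta> * colsum n i X - ?c)))"
  have Lpm[measurable]: "Lp \<in> borel_measurable (sample_dist n \<theta>0)" unfolding Lp_def by measurable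
  have Lmm[measurable]: "Lm \<in> borel_measurable (sample_dist n \<theta>0)" unfolding Lm_def by measurable
  have dp: "sample_dist n (\<theta>0(i := \<delta>)) = density (sample_dist n \<theta>0) Lp"
    unfolding Lp_def using density_lemma[of n \<theta>0 i \<delta>] \<theta>0 by simp
  have dm: "sample_dist n (\<theta>0(i := -\<delta>)) = density (sample_dist n \<theta>0) Lm"
    unfolding Lm_def using density_lemma[of n \<theta>0 i "-\<delta>"] \<theta>0 by simp
  have "(\<integral>\<^sup>+ X. ennreal ((g X - \<delta>)\<^sup>2) \<partial>sample_dist n (\<theta>0(i := \<delta>)))
      + (\<integral>\<^sup>+ X. ennreal ((g X + \<delta>)\<^sup>2) \<partial>sample_dist n (\<theta>0(i := -\<delta>)))
      = (\<integral>\<^sup>+ X. Lp X * ennreal ((g X - \<delta>)\<^sup>2) \<partial>sample_dist n \<theta>0) + (\<integral>\<^sup>+ X. Lm X * ennreal ((g X + \<delta>)\<^sup>2) \<partial>sample_dist n \<theta>0)"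
    unfolding dp dm using gm' by (simp add: nn_integral_density)
  also have "\<dots> = (\<integral>\<^sup>+ X. Lp X * ennreal ((g X - \<delta>)\<^sup>2) + Lm X * ennreal ((g X + \<delta>)\<^sup>2) \<partial>sample_dist n \<theta>0)"
    using gm' by (intro nn_integral_add[symmetric]) auto
  also have "\<dots> \<ge> (\<integral>\<^sup>+ X. ennreal (2 * \<delta>\<^sup>2 * exp (- ?c)) * ennreal (exp (- \<delta> * \<bar>colsum n i X\<bar>)) \<partial>sample_dist n \<theta>0)"
  proof (intro nn_integral_mono)
    fix X
    let ?s = "colsum n i X" and ?y = "g X"
    have e1: "exp (- \<delta> * \<bar>?s\<bar>) \<le> exp (\<delta> * ?s)" "exp (- \<delta> * \<bar>?s\<bar>) \<le> exp (- \<delta> * ?s)"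
      using \<delta> by (auto simp: abs_if)
    have "2 * \<delta>\<^sup>2 * exp (- ?c) * exp (- \<delta> * \<bar>?s\<bar>) \<le> exp (- ?c) * exp (- \<delta> * \<bar>?s\<bar>) * ((?y - \<delta>)\<^sup>2 + (?y + \<delta>)\<^sup>2)"
    proof -
      have "2 * \<delta>\<^sup>2 \<le> (?y - \<delta>)\<^sup>2 + (?y + \<delta>)\<^sup>2" by (simp add: power2_eq_square algebra_simps)
      then show ?thesis by (simp add: mult_left_mono mult.commute mult.left_commute)
    qed
    also have "\<dots> \<le> exp (- ?c) * (exp (\<delta> * ?s) * (?y - \<delta>)\<^sup>2 + exp (- \<delta> * ?s) * (?y + \<delta>)\<^sup>2)"
    proof -
      have "exp (- \<delta> * \<bar>?s\<bar>) * ((?y - \<delta>)\<^sup>2 + (?y + \<delta>)\<^sup>2) = exp (- \<delta> * \<bar>?s\<bar>) * (?y - \<delta>)\<^sup>2 + exp (- \<delta> * \<bar>?s\<bar>) * (?y + \<delta>)\<^sup>2"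
        by (simp add: distrib_left)
      also have "\<dots> \<le> exp (\<delta> * ?s) * (?y - \<delta>)\<^sup>2 + exp (- \<delta> * ?s) * (?y + \<delta>)\<^sup>2"
        using e1 by (intro add_mono mult_right_mono) auto
      finally show ?thesis by (simp add: mult.assoc)
    qed
    also have "\<dots> = exp (\<delta> * ?s - ?c) * (?y - \<delta>)\<^sup>2 + exp (- \<delta> * ?s - ?c) * (?y + \<delta>)\<^sup>2"
    proof -
      have "exp (\<delta> * ?s - ?c) = exp (- ?c) * exp (\<delta> * ?s)" "exp (- \<delta> * ?s - ?c) = exp (- ?c) * exp (- \<delta> * ?s)"
        by (simp_all add: exp_add[symmetric])
      then show ?thesis by (simp only: distrib_left mult.assoc)
    qed
    finally have r: "2 * \<delta>\<^sup>2 * exp (- ?c) * exp (- \<delta> * \<bar>?s\<bar>) \<le> exp (\<delta> * ?s - ?c) * (?y - \<delta>)\<^sup>2 + exp (- \<delta> * ?s - ?c) * (?y + \<delta>)\<^sup>2" .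
    show "ennreal (2 * \<delta>\<^sup>2 * exp (- ?c)) * ennreal (exp (- \<delta> * \<bar>?s\<bar>)) \<le> Lp X * ennreal ((?y - \<delta>)\<^sup>2) + Lm X * ennreal ((?y + \<delta>)\<^sup>2)"
      unfolding Lp_def Lm_def using r
      by (simp add: ennreal_mult'[symmetric] ennreal_plus[symmetric] del: ennreal_plus)
  qed
  finally have "ennreal (2 * \<delta>\<^sup>2 * exp (- ?c)) * (\<integral>\<^sup>+ X. ennreal (exp (- \<delta> * \<bar>colsum n i X\<bar>)) \<partial>sample_dist n \<theta>0)
      \<le> (\<integral>\<^sup>+ X. ennreal ((g X - \<delta>)\<^sup>2) \<partial>sample_dist n (\<theta>0(i := \<delta>)))
      + (\<integral>\<^sup>+ X. ennreal ((g X + \<delta>)\<^sup>2) \<partial>sample_dist n (\<theta>0(i := -\<delta>)))"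
    by (subst (asm) nn_integral_cmult) auto
  moreover have "ennreal (\<delta>\<^sup>2 / 16) \<le> ennreal (2 * \<delta>\<^sup>2 * exp (- ?c)) * ennreal (1 / (2 * exp 1))"
  proof -
    have "exp (1 + ?c) \<le> exp 2" using \<delta> by simp
    also have "exp (2::real) = exp 1 * exp 1" by (simp add: exp_add[symmetric])
    also have "\<dots> \<le> 3 * 3" using exp_le by (intro mult_mono) auto
    finally have h: "exp 1 * exp ?c \<le> 16" by (simp add: exp_add[symmetric])
    have "\<delta>\<^sup>2 / 16 \<le> \<delta>\<^sup>2 / (exp 1 * exp ?c)"
      using h by (intro divide_left_mono) auto
    also have "\<dots> = 2 * \<delta>\<^sup>2 * exp (- ?c) * (1 / (2 * exp 1))"
      by (simp add: exp_minus field_simps)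
    finally have "\<delta>\<^sup>2 / 16 \<le> 2 * \<delta>\<^sup>2 * exp (- ?c) * (1 / (2 * exp 1))" .
    then show ?thesis by (simp add: ennreal_mult'[symmetric])
  qed
  moreover have "ennreal (2 * \<delta>\<^sup>2 * exp (- ?c)) * ennreal (1 / (2 * exp 1)) \<le> ennreal (2 * \<delta>\<^sup>2 * exp (- ?c)) * (\<integral>\<^sup>+ X. ennreal (exp (- \<delta> * \<bar>colsum n i X\<bar>)) \<partial>sample_dist n \<theta>0)"
    using Q_lb[of \<delta> n \<theta>0 i] \<delta> \<theta>0 by (intro mult_left_mono) auto
  ultimately show ?thesis by (meson order_trans)
qed

lemma est_meas_dist:
  assumes "(\<lambda>X. est X i) \<in> borel_measurable (sample_space n)"
  shows "(\<lambda>X. est X i) \<in> borel_measurable (sample_dist n \<theta>)"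
  using assms by (simp add: measurable_cong_sets[OF sets_sample_dist refl])

lemma risk_ge_sum:
  assumes fin: "finite S" and m: "\<And>i. (\<lambda>X. est X i) \<in> borel_measurable (sample_space n)"
  shows "(\<Sum>i\<in>S. \<integral>\<^sup>+ X. ennreal ((est X i - \<theta> i)\<^sup>2) \<partial>sample_dist n \<theta>) \<le> risk n est \<theta>"
proof -
  have "(\<Sum>i\<in>S. \<integral>\<^sup>+ X. ennreal ((est X i - \<theta> i)\<^sup>2) \<partial>sample_dist n \<theta>)
      = (\<integral>\<^sup>+ X. (\<Sum>i\<in>S. ennreal ((est X i - \<theta> i)\<^sup>2)) \<partial>sample_dist n \<theta>)"
  proof (intro nn_integral_sum[symmetric])
    fix i
    have [measurable]: "(\<lambda>X. est X i) \<in> borel_measurable (sample_dist n \<theta>)" by (rule est_meas_dist[OF m])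
    show "(\<lambda>X. ennreal ((est X i - \<theta> i)\<^sup>2)) \<in> borel_measurable (sample_dist n \<theta>)" by measurable
  qed
  also have "\<dots> \<le> risk n est \<theta>"
    unfolding risk_def
    by (intro nn_integral_mono sum_le_suminf summableI fin) auto
  finally show ?thesis .
qed

definition thA :: "nat \<Rightarrow> real \<Rightarrow> nat set \<Rightarrow> nat \<Rightarrow> real" where
  "thA d \<delta> A = (\<lambda>i. if i \<in> {d..<2*d} then (if i \<in> A then \<delta> else -\<delta>) else 0)"

lemma thA_Gamma:
  assumes d: "d \<ge> 1" shows "thA d (1 / (2 * real d ^ 2)) A \<in> Gamma_weighted"
proof -
  let ?\<delta> = "1 / (2 * real d ^ 2)"
  let ?f = "\<lambda>i. real (i + 1) * \<bar>thA d ?\<delta> A i\<bar>"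
  have z: "\<And>i. i \<notin> {d..<2*d} \<Longrightarrow> ?f i = 0" unfolding thA_def by auto
  have "(\<Sum>i. ?f i) = (\<Sum>i\<in>{d..<2*d}. ?f i)" by (rule suminf_finite) (use z in auto)
  also have "\<dots> \<le> (\<Sum>i\<in>{d..<2*d}. real (2 * d) * ?\<delta>)"
  proof (intro sum_mono)
    fix i assume i: "i \<in> {d..<2*d}"
    then have "real (i + 1) \<le> real (2 * d)" by simp
    moreover have "\<bar>thA d ?\<delta> A i\<bar> = ?\<delta>" using i unfolding thA_def by auto
    moreover have "0 \<le> ?\<delta>" by simp
    ultimately show "?f i \<le> real (2 * d) * ?\<delta>"
      by (metis mult_right_mono)
  qed
  also have "\<dots> = 1" using d by (simp add: power2_eq_square)
  finally show ?thesis unfolding Gamma_weighted_def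
    using summable_finite[of "{d..<2*d}" ?f] z by auto
qed

lemma lower_main:
  assumes ach: "achievable Gamma_weighted \<epsilon> n" and d: "d \<ge> 1" and dn: "2 * real n \<le> real d ^ 4"
  shows "1 / (128 * real d ^ 3) \<le> \<epsilon>\<^sup>2"
proof -
  obtain est where m: "\<And>i. (\<lambda>X. est X i) \<in> borel_measurable (sample_space n)"
    and r: "\<And>\<theta>. \<theta> \<in> Gamma_weighted \<Longrightarrow> risk n est \<theta> \<le> ennreal (\<epsilon>\<^sup>2)"
    using ach unfolding achievable_def by blast
  define \<delta> where "\<delta> = 1 / (2 * real d ^ 2)"
  define S where "S = {d..<2*d}"
  define h where "h = (\<lambda>i A. \<integral>\<^sup>+ X. ennreal ((est X i - thA d \<delta> A i)\<^sup>2) \<partial>sample_dist n (thA d \<delta> A))"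
  have \<delta>pos: "\<delta> > 0" unfolding \<delta>_def using d by simp
  have n\<delta>: "real n * \<delta>\<^sup>2 \<le> 1/8"
  proof -
    have "real n * \<delta>\<^sup>2 = real n / (4 * real d ^ 4)" unfolding \<delta>_def by (simp add: power2_eq_square field_simps eval_nat_numeral)
    also have "\<dots> \<le> 1/8" using dn d by (simp add: field_simps)
    finally show ?thesis .
  qed
  have finS: "finite S" unfolding S_def by simp
  have cardS: "card S = d" unfolding S_def by simp
  have per_i: "ennreal (2 ^ (d - 1) * (\<delta>\<^sup>2 / 16)) \<le> (\<Sum>A\<in>Pow S. h i A)" if i: "i \<in> S" for i
  proof -
    define T where "T = S - {i}"
    have ST: "S = insert i T" "i \<notin> T" "finite T" using i finS unfolding T_def by auto
    have inj: "inj_on (insert i) (Pow T)"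
      by (rule inj_onI) (metis Diff_insert_absorb PowD ST(2) subsetD)
    have "(\<Sum>A\<in>Pow S. h i A) = (\<Sum>A\<in>Pow T. h i A) + (\<Sum>A\<in>insert i ` Pow T. h i A)"
      unfolding ST(1) Pow_insert using ST by (intro sum.union_disjoint) auto
    also have "\<dots> = (\<Sum>B\<in>Pow T. h i (insert i B) + h i B)"
      by (simp add: sum.reindex[OF inj] sum.distrib add.commute)
    also have "\<dots> \<ge> (\<Sum>B\<in>Pow T. ennreal (\<delta>\<^sup>2 / 16))"
    proof (intro sum_mono)
      fix B assume B: "B \<in> Pow T"
      define \<theta>0 where "\<theta>0 = (thA d \<delta> B)(i := 0)"
      have iS: "i \<in> {d..<2*d}" using i unfolding S_def .
      have iB: "i \<notin> B" using B ST by auto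
      have e1: "thA d \<delta> (insert i B) = \<theta>0(i := \<delta>)"
        unfolding \<theta>0_def thA_def using iS by (auto simp: fun_eq_iff)
      have e2: "thA d \<delta> B = \<theta>0(i := -\<delta>)"
        unfolding \<theta>0_def thA_def using iS iB by (auto simp: fun_eq_iff)
      have "ennreal (\<delta>\<^sup>2 / 16) \<le> (\<integral>\<^sup>+ X. ennreal ((est X i - \<delta>)\<^sup>2) \<partial>sample_dist n (\<theta>0(i := \<delta>)))
          + (\<integral>\<^sup>+ X. ennreal ((est X i + \<delta>)\<^sup>2) \<partial>sample_dist n (\<theta>0(i := -\<delta>)))"
        by (rule pair_lb[OF m \<delta>pos n\<delta>]) (simp add: \<theta>0_def)
      also have "\<dots> = h i (insert i B) + h i B"
        unfolding h_def e1 e2[symmetric] by (simp add: e2)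
      finally show "ennreal (\<delta>\<^sup>2 / 16) \<le> h i (insert i B) + h i B" .
    qed
    also have "(\<Sum>B\<in>Pow T. ennreal (\<delta>\<^sup>2 / 16)) = ennreal (2 ^ (d - 1) * (\<delta>\<^sup>2 / 16))"
    proof -
      have "card T = d - 1" unfolding T_def using i finS cardS by simp
      moreover have "ennreal (2 ^ (d - 1) * (\<delta>\<^sup>2 / 16)) = ennreal (2 ^ (d - 1)) * ennreal (\<delta>\<^sup>2 / 16)"
        by (rule ennreal_mult) auto
      moreover have "ennreal ((2::real) ^ (d - 1)) = 2 ^ (d - 1)"
        using ennreal_power[of 2 "d - 1"] by simp
      ultimately show ?thesis using ST by (simp add: card_Pow)
    qed
    finally show ?thesis .
  qed
  have "ennreal (real d * (2 ^ (d - 1) * (\<delta>\<^sup>2 / 16))) = (\<Sum>i\<in>S. ennreal (2 ^ (d - 1) * (\<delta>\<^sup>2 / 16)))"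
  proof -
    have "ennreal (real d * (2 ^ (d - 1) * (\<delta>\<^sup>2 / 16))) = ennreal (real d) * ennreal (2 ^ (d - 1) * (\<delta>\<^sup>2 / 16))"
      by (rule ennreal_mult) auto
    then show ?thesis using cardS by (simp add: ennreal_of_nat_eq_real_of_nat)
  qed
  also have "\<dots> \<le> (\<Sum>i\<in>S. \<Sum>A\<in>Pow S. h i A)"
    by (intro sum_mono per_i)
  also have "\<dots> = (\<Sum>A\<in>Pow S. \<Sum>i\<in>S. h i A)"
    by (rule sum.swap)
  also have "\<dots> \<le> (\<Sum>A\<in>Pow S. risk n est (thA d \<delta> A))"
    unfolding h_def by (intro sum_mono risk_ge_sum finS m)
  also have "\<dots> \<le> (\<Sum>A\<in>Pow S. ennreal (\<epsilon>\<^sup>2))"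
    using thA_Gamma[OF d] unfolding \<delta>_def by (intro sum_mono r) auto
  also have "\<dots> = ennreal (2 ^ d * \<epsilon>\<^sup>2)"
    using finS cardS by (simp add: card_Pow ennreal_mult' ennreal_power ennreal_of_nat_eq_real_of_nat)
  finally have "real d * (2 ^ (d - 1) * (\<delta>\<^sup>2 / 16)) \<le> 2 ^ d * \<epsilon>\<^sup>2"
    by (subst (asm) ennreal_le_iff) auto
  moreover have "(2::real) ^ d = 2 * 2 ^ (d - 1)" using d by (cases d) auto
  ultimately have "real d * (\<delta>\<^sup>2 / 32) \<le> \<epsilon>\<^sup>2" by simp
  moreover have "real d * (\<delta>\<^sup>2 / 32) = 1 / (128 * real d ^ 3)"
    unfolding \<delta>_def using d by (simp add: power2_eq_square field_simps eval_nat_numeral)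
  ultimately show ?thesis by simp
qed

definition thr :: "real \<Rightarrow> real \<Rightarrow> real" where
  "thr \<tau> y = (if \<tau> < \<bar>y\<bar> then y else 0)"

lemma sq_le_exp_pos: "0 \<le> x \<Longrightarrow> x\<^sup>2 \<le> 2 * exp (x::real)"
  using exp_lower_Taylor_quadratic[of x] by simp

lemma sq_le_exp: "(x::real)\<^sup>2 \<le> 2 * (exp x + exp (- x))"
proof (cases "x \<ge> 0")
  case True
  then show ?thesis using sq_le_exp_pos[of x] by (smt (verit) exp_gt_zero)
next
  case False
  then show ?thesis using sq_le_exp_pos[of "-x"] by (smt (verit) exp_gt_zero power2_minus)
qed

lemma thr_pw:
  assumes \<tau>: "\<tau> > 0"
  shows "(thr \<tau> (\<theta> + w) - \<theta>)\<^sup>2 \<le> (if \<bar>\<theta>\<bar> < 2 * \<tau> then \<theta>\<^sup>2 else 0) + (if \<tau> / 2 < \<bar>\<theta>\<bar> then 4 * w\<^sup>2 else 0)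
     + (if \<tau> / 2 < \<bar>w\<bar> then w\<^sup>2 else 0)"
proof (cases "\<tau> < \<bar>\<theta> + w\<bar>")
  case True
  then have e: "(thr \<tau> (\<theta> + w) - \<theta>)\<^sup>2 = w\<^sup>2" unfolding thr_def by simp
  show ?thesis
  proof (cases "\<tau> / 2 < \<bar>\<theta>\<bar>")
    case True
    then show ?thesis unfolding e by (simp add: zero_le_power2)
  next
    case False
    then have "\<tau> / 2 < \<bar>w\<bar>" using \<open>\<tau> < \<bar>\<theta> + w\<bar>\<close> by linarith
    then show ?thesis unfolding e using False by (simp add: zero_le_power2)
  qed
next
  case False
  then have e: "(thr \<tau> (\<theta> + w) - \<theta>)\<^sup>2 = \<theta>\<^sup>2" unfolding thr_def by simp
  show ?thesis
  proof (cases "\<bar>\<theta>\<bar> < 2 * \<tau>")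
    case True
    then show ?thesis unfolding e by (simp add: zero_le_power2)
  next
    case c2: False
    then have "\<bar>\<theta>\<bar> \<le> 2 * \<bar>w\<bar>" using False by linarith
    then have "\<bar>\<theta>\<bar>\<^sup>2 \<le> (2 * \<bar>w\<bar>)\<^sup>2" by (intro power_mono) auto
    then have "\<theta>\<^sup>2 \<le> 4 * w\<^sup>2" by (simp add: power_mult_distrib)
    moreover have "\<tau> / 2 < \<bar>\<theta>\<bar>" using c2 \<tau> by linarith
    ultimately have i2: "(if \<tau> / 2 < \<bar>\<theta>\<bar> then 4 * w\<^sup>2 else 0) = 4 * w\<^sup>2" "\<theta>\<^sup>2 \<le> 4 * w\<^sup>2" by simp_all
    have i1: "(if \<bar>\<theta>\<bar> < 2 * \<tau> then \<theta>\<^sup>2 else 0) = 0" using c2 by simp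
    have i3: "0 \<le> (if \<tau> / 2 < \<bar>w\<bar> then w\<^sup>2 else 0)" by simp
    show ?thesis unfolding e i1 i2(1) using i2(2) i3 by linarith
  qed
qed

lemma tail_pw:
  fixes \<mu> s w :: real
  assumes \<mu>: "\<mu> > 0"
  shows "(if s < \<bar>w\<bar> then w\<^sup>2 else 0) \<le> (2 / \<mu>\<^sup>2) * exp (- \<mu> * s) * (exp ((2 * \<mu>) * w) + exp (- (2 * \<mu>) * w))"
proof (cases "s < \<bar>w\<bar>")
  case True
  have h: "(\<mu> * \<bar>w\<bar>)\<^sup>2 \<le> 2 * exp (\<mu> * \<bar>w\<bar>)" using \<mu> by (intro sq_le_exp_pos) auto
  have ww: "w\<^sup>2 = (\<mu> * \<bar>w\<bar>)\<^sup>2 / \<mu>\<^sup>2" using \<mu> by (simp add: power_mult_distrib)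
  have a: "w\<^sup>2 \<le> (2 / \<mu>\<^sup>2) * exp (\<mu> * \<bar>w\<bar>)"
    unfolding ww using divide_right_mono[OF h, of "\<mu>\<^sup>2"] by simp
  have b: "1 \<le> exp (\<mu> * \<bar>w\<bar> - \<mu> * s)" using True \<mu> by simp
  have "(2 / \<mu>\<^sup>2) * exp (\<mu> * \<bar>w\<bar>) * 1 \<le> (2 / \<mu>\<^sup>2) * exp (\<mu> * \<bar>w\<bar>) * exp (\<mu> * \<bar>w\<bar> - \<mu> * s)"
    by (rule mult_left_mono[OF b]) simp
  with a have "w\<^sup>2 \<le> (2 / \<mu>\<^sup>2) * exp (\<mu> * \<bar>w\<bar>) * exp (\<mu> * \<bar>w\<bar> - \<mu> * s)" by simp
  also have "\<dots> = (2 / \<mu>\<^sup>2) * exp (- \<mu> * s) * exp (2 * \<mu> * \<bar>w\<bar>)"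
  proof -
    have "exp (\<mu> * \<bar>w\<bar>) * exp (\<mu> * \<bar>w\<bar> - \<mu> * s) = exp (- \<mu> * s) * exp (2 * \<mu> * \<bar>w\<bar>)"
      unfolding exp_add[symmetric] by (rule arg_cong[where f=exp]) simp
    then show ?thesis by (simp only: mult.assoc)
  qed
  also have "\<dots> \<le> (2 / \<mu>\<^sup>2) * exp (- \<mu> * s) * (exp ((2 * \<mu>) * w) + exp (- (2 * \<mu>) * w))"
  proof (rule mult_left_mono)
    show "exp (2 * \<mu> * \<bar>w\<bar>) \<le> exp ((2 * \<mu>) * w) + exp (- (2 * \<mu>) * w)"
      by (cases "w \<ge> 0") auto
  qed simp
  finally show ?thesis using True by simp
next
  case False
  then show ?thesis using \<mu> by simp
qed

lemma colsum_meas_space[measurable]: "colsum n i \<in> borel_measurable (sample_space n)"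
  using colsum_meas[of n i undefined] by (simp add: measurable_cong_sets[OF sets_sample_dist refl])

lemma emeasure_space_sd[simp]: "emeasure (sample_dist n \<theta>) (space (sample_dist n \<theta>)) = 1"
  using prob_space.emeasure_space_1[OF prob_sample_dist[of n \<theta>]] by simp

lemma nn_integral_const_sd: "(\<integral>\<^sup>+ X. c \<partial>sample_dist n \<theta>) = c"
  using prob_space.emeasure_space_1[OF prob_sample_dist[of n \<theta>]] by simp

lemma coord_ub:
  assumes n: "n \<ge> 1" and \<tau>: "\<tau> > 0" and \<mu>: "\<mu> > 0"
  shows "(\<integral>\<^sup>+ X. ennreal ((thr \<tau> (colsum n i X / real n) - \<theta> i)\<^sup>2) \<partial>sample_dist n \<theta>)
     \<le> ennreal ((if \<bar>\<theta> i\<bar> < 2 * \<tau> then (\<theta> i)\<^sup>2 else 0) + (if \<tau> / 2 < \<bar>\<theta> i\<bar> then 16 * exp (1/2) / real n else 0)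
         + (4 / \<mu>\<^sup>2) * exp (- \<mu> * (\<tau> / 2) + 2 * \<mu>\<^sup>2 / real n))"
proof -
  let ?t = "\<theta> i"
  define u where "u = (\<lambda>X. colsum n i X - real n * ?t)"
  define A where "A = (if \<bar>?t\<bar> < 2 * \<tau> then ?t\<^sup>2 else 0)"
  define B where "B = (if \<tau> / 2 < \<bar>?t\<bar> then 8 / real n else 0)"
  define C where "C = (2 / \<mu>\<^sup>2) * exp (- \<mu> * (\<tau> / 2))"
  define l where "l = 1 / sqrt (real n)"
  define k where "k = 2 * \<mu> / real n"
  have npos: "real n > 0" using n by simp
  have A0: "A \<ge> 0" and B0: "B \<ge> 0" and C0: "C \<ge> 0" unfolding A_def B_def C_def by auto
  have mg: "\<And>c. (\<integral>\<^sup>+ X. ennreal (exp (c * u X)) \<partial>sample_dist n \<theta>) = ennreal (exp (real n * c\<^sup>2 / 2))"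
    unfolding u_def by (rule mgf_col)
  have pw: "(thr \<tau> (colsum n i X / real n) - ?t)\<^sup>2 \<le> A + B * (exp (l * u X) + exp (- l * u X)) + C * (exp (k * u X) + exp (- k * u X))" for X
  proof -
    define w where "w = u X / real n"
    have y: "colsum n i X / real n = ?t + w" unfolding w_def u_def using npos by (simp add: field_simps)
    have w2: "w\<^sup>2 \<le> (2 / real n) * (exp (l * u X) + exp (- l * u X))"
    proof -
      have "(l * u X)\<^sup>2 \<le> 2 * (exp (l * u X) + exp (- (l * u X)))" by (rule sq_le_exp)
      moreover have "(l * u X)\<^sup>2 = real n * w\<^sup>2" unfolding l_def w_def using npos
        by (simp add: power_mult_distrib power_divide field_simps power2_eq_square)
      ultimately have "real n * w\<^sup>2 \<le> 2 * (exp (l * u X) + exp (- l * u X))" by simp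
      then show ?thesis using npos by (simp add: field_simps)
    qed
    have "(thr \<tau> (colsum n i X / real n) - ?t)\<^sup>2 \<le> A + (if \<tau> / 2 < \<bar>?t\<bar> then 4 * w\<^sup>2 else 0) + (if \<tau> / 2 < \<bar>w\<bar> then w\<^sup>2 else 0)"
      unfolding y A_def by (rule thr_pw[OF \<tau>])
    also have "(if \<tau> / 2 < \<bar>?t\<bar> then 4 * w\<^sup>2 else 0) \<le> B * (exp (l * u X) + exp (- l * u X))"
    proof -
      have "(8 / real n) * (exp (l * u X) + exp (- l * u X)) = 4 * ((2 / real n) * (exp (l * u X) + exp (- l * u X)))" by simp
      moreover have "4 * w\<^sup>2 \<le> 4 * ((2 / real n) * (exp (l * u X) + exp (- l * u X)))"
        using w2 by linarith
      ultimately show ?thesis unfolding B_def by simp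
    qed
    also have "(if \<tau> / 2 < \<bar>w\<bar> then w\<^sup>2 else 0) \<le> C * (exp (k * u X) + exp (- k * u X))"
    proof -
      have "(2 * \<mu>) * w = k * u X" "- (2 * \<mu>) * w = - k * u X" unfolding k_def w_def by auto
      then show ?thesis unfolding C_def using tail_pw[OF \<mu>, of "\<tau> / 2" w] by simp
    qed
    finally show ?thesis by simp
  qed
  have "(\<integral>\<^sup>+ X. ennreal ((thr \<tau> (colsum n i X / real n) - ?t)\<^sup>2) \<partial>sample_dist n \<theta>)
     \<le> (\<integral>\<^sup>+ X. ennreal A + ennreal B * (ennreal (exp (l * u X)) + ennreal (exp (- l * u X)))
           + ennreal C * (ennreal (exp (k * u X)) + ennreal (exp (- k * u X))) \<partial>sample_dist n \<theta>)"
  proof (intro nn_integral_mono)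
    fix X
    show "ennreal ((thr \<tau> (colsum n i X / real n) - ?t)\<^sup>2) \<le> ennreal A + ennreal B * (ennreal (exp (l * u X)) + ennreal (exp (- l * u X)))
           + ennreal C * (ennreal (exp (k * u X)) + ennreal (exp (- k * u X)))"
      using pw[of X] A0 B0 C0
      by (simp add: ennreal_mult'[symmetric] ennreal_plus[symmetric] del: ennreal_plus)
  qed
  also have "\<dots> = ennreal A + ennreal B * (ennreal (exp (real n * l\<^sup>2 / 2)) + ennreal (exp (real n * (- l)\<^sup>2 / 2)))
           + ennreal C * (ennreal (exp (real n * k\<^sup>2 / 2)) + ennreal (exp (real n * (- k)\<^sup>2 / 2)))"
    using mg[of l] mg[of "-l"] mg[of k] mg[of "-k"]
    by (simp add: nn_integral_add nn_integral_cmult u_def nn_integral_const_sd)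
  also have "\<dots> = ennreal (A + B * (2 * exp (1/2)) + C * (2 * exp (2 * \<mu>\<^sup>2 / real n)))"
  proof -
    have "real n * l\<^sup>2 / 2 = 1/2" unfolding l_def using npos by (simp add: power_divide)
    moreover have "real n * k\<^sup>2 / 2 = 2 * \<mu>\<^sup>2 / real n" unfolding k_def using npos by (simp add: power2_eq_square field_simps)
    ultimately show ?thesis using A0 B0 C0
      by (simp add: ennreal_mult'[symmetric] ennreal_plus[symmetric] del: ennreal_plus)
  qed
  also have "\<dots> = ennreal ((if \<bar>\<theta> i\<bar> < 2 * \<tau> then (\<theta> i)\<^sup>2 else 0) + (if \<tau> / 2 < \<bar>\<theta> i\<bar> then 16 * exp (1/2) / real n else 0)
         + (4 / \<mu>\<^sup>2) * exp (- \<mu> * (\<tau> / 2) + 2 * \<mu>\<^sup>2 / real n))"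
  proof -
    have "exp (- (\<mu> * \<tau> / 2)) * exp (2 * \<mu>\<^sup>2 / real n) = exp (2 * \<mu>\<^sup>2 / real n - \<mu> * \<tau> / 2)"
      unfolding exp_add[symmetric] by (rule arg_cong[where f=exp]) simp
    then show ?thesis unfolding A_def B_def C_def by (simp add: exp_add)
  qed
  finally show ?thesis .
qed

definition estU :: "nat \<Rightarrow> real \<Rightarrow> (nat \<times> nat \<Rightarrow> real) \<Rightarrow> nat \<Rightarrow> real" where
  "estU n \<tau> = (\<lambda>X i. if i < n then thr \<tau> (colsum n i X / real n) else 0)"

lemma estU_meas: "(\<lambda>X. estU n \<tau> X i) \<in> borel_measurable (sample_space n)"
  unfolding estU_def thr_def by measurable

lemma min5: "(a::real) \<le> 4 * x \<Longrightarrow> a \<le> 2 * y \<Longrightarrow> b \<le> x / 2 \<Longrightarrow> b \<le> y \<Longrightarrow> 0 \<le> x \<Longrightarrow> 0 \<le> y \<Longrightarrow> a + b \<le> 5 * min x y"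
  by (auto simp: min_def)

lemma mi_bound:
  assumes \<tau>: "\<tau> > 0" and h1: "16 * exp (1/2) / real n \<le> \<tau>\<^sup>2 / 2"
  shows "(if \<bar>t\<bar> < 2 * \<tau> then t\<^sup>2 else 0) + (if \<tau> / 2 < \<bar>t\<bar> then 16 * exp (1/2) / real n else 0)
     \<le> 5 * min (\<tau>\<^sup>2) (\<tau> * \<bar>t\<bar>)"
proof -
  have B1: "(if \<tau> / 2 < \<bar>t\<bar> then 16 * exp (1/2) / real n else 0) \<le> \<tau>\<^sup>2 / 2"
    using h1 \<tau> by auto
  have B2: "(if \<tau> / 2 < \<bar>t\<bar> then 16 * exp (1/2) / real n else 0) \<le> \<tau> * \<bar>t\<bar>"
  proof (cases "\<tau> / 2 < \<bar>t\<bar>")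
    case True
    then have "\<tau>\<^sup>2 / 2 \<le> \<tau> * \<bar>t\<bar>" using \<tau> by (simp add: power2_eq_square)
    then show ?thesis using h1 True by simp
  qed (use \<tau> in auto)
  have A1: "(if \<bar>t\<bar> < 2 * \<tau> then t\<^sup>2 else 0) \<le> 4 * \<tau>\<^sup>2"
  proof (cases "\<bar>t\<bar> < 2 * \<tau>")
    case True
    then have "\<bar>t\<bar>\<^sup>2 \<le> (2 * \<tau>)\<^sup>2" by (intro power_mono) auto
    then show ?thesis using True by (simp add: power_mult_distrib)
  qed (use \<tau> in auto)
  have A2: "(if \<bar>t\<bar> < 2 * \<tau> then t\<^sup>2 else 0) \<le> 2 * (\<tau> * \<bar>t\<bar>)"
  proof (cases "\<bar>t\<bar> < 2 * \<tau>")
    case True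
    have "t\<^sup>2 = \<bar>t\<bar> * \<bar>t\<bar>" by (simp add: power2_eq_square)
    also have "\<dots> \<le> (2 * \<tau>) * \<bar>t\<bar>" using True by (intro mult_right_mono) auto
    finally show ?thesis using True by simp
  qed (use \<tau> in auto)
  show ?thesis by (rule min5[OF A1 A2 B1 B2]) (use \<tau> in auto)
qed

lemma Gamma_term:
  assumes "\<theta> \<in> Gamma_weighted" shows "real (i + 1) * \<bar>\<theta> i\<bar> \<le> 1"
proof -
  have s: "summable (\<lambda>i. real (i + 1) * \<bar>\<theta> i\<bar>)" and le: "(\<Sum>i. real (i + 1) * \<bar>\<theta> i\<bar>) \<le> 1"
    using assms unfolding Gamma_weighted_def by auto
  have "(\<Sum>j\<in>{i}. real (j + 1) * \<bar>\<theta> j\<bar>) \<le> (\<Sum>j. real (j + 1) * \<bar>\<theta> j\<bar>)"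
    by (rule sum_le_suminf[OF s]) auto
  then show ?thesis using le by simp
qed

lemma risk_ub:
  assumes n: "n \<ge> 1" and \<tau>: "\<tau> > 0" and \<mu>: "\<mu> > 0" and \<theta>: "\<theta> \<in> Gamma_weighted"
    and h1: "16 * exp (1/2) / real n \<le> \<tau>\<^sup>2 / 2" and h2: "1 / real (n + 1) \<le> \<tau>"
  shows "risk n (estU n \<tau>) \<theta> \<le> ennreal (5 * real d * \<tau>\<^sup>2 + 5 * \<tau> / real (d + 1)
            + real n * ((4 / \<mu>\<^sup>2) * exp (- \<mu> * (\<tau> / 2) + 2 * \<mu>\<^sup>2 / real n)))"
proof -
  define T where "T = (4 / \<mu>\<^sup>2) * exp (- \<mu> * (\<tau> / 2) + 2 * \<mu>\<^sup>2 / real n)"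
  define c where "c = 5 * \<tau> / real (d + 1)"
  define g where "g = (\<lambda>i. 5 * (if i < d then \<tau>\<^sup>2 else 0) + c * (real (i + 1) * \<bar>\<theta> i\<bar>) + (if i < n then T else 0))"
  have T0: "T \<ge> 0" unfolding T_def by simp
  have c0: "c \<ge> 0" unfolding c_def using \<tau> by simp
  have s: "summable (\<lambda>i. real (i + 1) * \<bar>\<theta> i\<bar>)" and le1: "(\<Sum>i. real (i + 1) * \<bar>\<theta> i\<bar>) \<le> 1"
    using \<theta> unfolding Gamma_weighted_def by auto
  have g0: "\<And>i. g i \<ge> 0" unfolding g_def using T0 c0 \<tau> by auto
  have minb: "min (\<tau>\<^sup>2) (\<tau> * \<bar>\<theta> i\<bar>) \<le> (if i < d then \<tau>\<^sup>2 else 0) + c / 5 * (real (i + 1) * \<bar>\<theta> i\<bar>)" for i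
  proof (cases "i < d")
    case True
    have "0 \<le> c / 5 * (real (i + 1) * \<bar>\<theta> i\<bar>)" using c0 by simp
    moreover have "min (\<tau>\<^sup>2) (\<tau> * \<bar>\<theta> i\<bar>) \<le> \<tau>\<^sup>2" by simp
    ultimately show ?thesis using True by simp
  next
    case False
    have "\<tau> * \<bar>\<theta> i\<bar> = (\<tau> / real (d + 1)) * (real (d + 1) * \<bar>\<theta> i\<bar>)" by simp
    also have "\<dots> \<le> (\<tau> / real (d + 1)) * (real (i + 1) * \<bar>\<theta> i\<bar>)"
      using False \<tau> by (intro mult_left_mono mult_right_mono) auto
    finally have f: "\<tau> * \<bar>\<theta> i\<bar> \<le> (\<tau> / real (d + 1)) * (real (i + 1) * \<bar>\<theta> i\<bar>)" .
    have c5: "c / 5 = \<tau> / real (d + 1)" unfolding c_def by (simp add: field_simps)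
    have "min (\<tau>\<^sup>2) (\<tau> * \<bar>\<theta> i\<bar>) \<le> \<tau> * \<bar>\<theta> i\<bar>" by simp
    then show ?thesis using False f unfolding c5 by simp
  qed
  have per_i: "(\<integral>\<^sup>+ X. ennreal ((estU n \<tau> X i - \<theta> i)\<^sup>2) \<partial>sample_dist n \<theta>) \<le> ennreal (g i)" for i
  proof (cases "i < n")
    case True
    have "(\<integral>\<^sup>+ X. ennreal ((estU n \<tau> X i - \<theta> i)\<^sup>2) \<partial>sample_dist n \<theta>)
        = (\<integral>\<^sup>+ X. ennreal ((thr \<tau> (colsum n i X / real n) - \<theta> i)\<^sup>2) \<partial>sample_dist n \<theta>)"
      unfolding estU_def using True by simp
    also have "\<dots> \<le> ennreal ((if \<bar>\<theta> i\<bar> < 2 * \<tau> then (\<theta> i)\<^sup>2 else 0) + (if \<tau> / 2 < \<bar>\<theta> i\<bar> then 16 * exp (1/2) / real n else 0) + T)"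
      unfolding T_def by (rule coord_ub[OF n \<tau> \<mu>])
    also have "\<dots> \<le> ennreal (g i)"
    proof (rule ennreal_leI)
      have "(if \<bar>\<theta> i\<bar> < 2 * \<tau> then (\<theta> i)\<^sup>2 else 0) + (if \<tau> / 2 < \<bar>\<theta> i\<bar> then 16 * exp (1/2) / real n else 0)
          \<le> 5 * min (\<tau>\<^sup>2) (\<tau> * \<bar>\<theta> i\<bar>)" by (rule mi_bound[OF \<tau> h1])
      also have "\<dots> \<le> 5 * ((if i < d then \<tau>\<^sup>2 else 0) + c / 5 * (real (i + 1) * \<bar>\<theta> i\<bar>))"
        using minb[of i] by simp
      finally show "(if \<bar>\<theta> i\<bar> < 2 * \<tau> then (\<theta> i)\<^sup>2 else 0) + (if \<tau> / 2 < \<bar>\<theta> i\<bar> then 16 * exp (1/2) / real n else 0) + T \<le> g i"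
        unfolding g_def using True by (simp add: algebra_simps)
    qed
    finally show ?thesis .
  next
    case False
    have "(\<integral>\<^sup>+ X. ennreal ((estU n \<tau> X i - \<theta> i)\<^sup>2) \<partial>sample_dist n \<theta>) = ennreal ((\<theta> i)\<^sup>2)"
      unfolding estU_def using False by (simp add: nn_integral_const_sd)
    also have "\<dots> \<le> ennreal (g i)"
    proof (rule ennreal_leI)
      have ti: "\<bar>\<theta> i\<bar> \<le> 1 / real (i + 1)"
        using Gamma_term[OF \<theta>, of i] by (simp add: field_simps)
      also have "\<dots> \<le> 1 / real (n + 1)" using False by (intro divide_left_mono) auto
      finally have "\<bar>\<theta> i\<bar> \<le> \<tau>" using h2 by simp
      then have q1: "\<bar>\<theta> i\<bar> * \<bar>\<theta> i\<bar> \<le> \<tau> * \<bar>\<theta> i\<bar>" by (intro mult_right_mono) auto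
      have q2: "\<tau> * \<bar>\<theta> i\<bar> \<le> \<tau> * \<tau>" using \<open>\<bar>\<theta> i\<bar> \<le> \<tau>\<close> \<tau> by (intro mult_left_mono) auto
      have q3: "(\<theta> i)\<^sup>2 = \<bar>\<theta> i\<bar> * \<bar>\<theta> i\<bar>" by (simp add: power2_eq_square)
      have "(\<theta> i)\<^sup>2 \<le> min (\<tau>\<^sup>2) (\<tau> * \<bar>\<theta> i\<bar>)"
        unfolding q3 power2_eq_square using q1 q2 by simp
      also have "\<dots> \<le> 5 * ((if i < d then \<tau>\<^sup>2 else 0) + c / 5 * (real (i + 1) * \<bar>\<theta> i\<bar>))"
      proof -
        have "0 \<le> (if i < d then \<tau>\<^sup>2 else 0) + c / 5 * (real (i + 1) * \<bar>\<theta> i\<bar>)" using c0 by simp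
        moreover have "\<And>m z::real. 0 \<le> z \<Longrightarrow> m \<le> z \<Longrightarrow> m \<le> 5 * z" by linarith
        ultimately show ?thesis using minb[of i] by blast
      qed
      finally show "(\<theta> i)\<^sup>2 \<le> g i" unfolding g_def using False by (simp add: algebra_simps)
    qed
    finally show ?thesis .
  qed
  have sg: "summable g"
  proof -
    have "summable (\<lambda>i. 5 * (if i < d then \<tau>\<^sup>2 else 0))" by (rule summable_finite[of "{..<d}"]) auto
    moreover have "summable (\<lambda>i. c * (real (i + 1) * \<bar>\<theta> i\<bar>))" by (rule summable_mult[OF s])
    moreover have "summable (\<lambda>i. if i < n then T else 0)" by (rule summable_finite[of "{..<n}"]) auto
    ultimately show ?thesis unfolding g_def by (intro summable_add) auto
  qed
  have sumg: "(\<Sum>i. g i) \<le> 5 * real d * \<tau>\<^sup>2 + 5 * \<tau> / real (d + 1) + real n * T"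
  proof -
    have e1: "(\<Sum>i. 5 * (if i < d then \<tau>\<^sup>2 else 0)) = 5 * real d * \<tau>\<^sup>2"
      by (subst suminf_finite[of "{..<d}"]) auto
    have e3: "(\<Sum>i. if i < n then T else 0) = real n * T"
      by (subst suminf_finite[of "{..<n}"]) auto
    have e2: "(\<Sum>i. c * (real (i + 1) * \<bar>\<theta> i\<bar>)) = c * (\<Sum>i. real (i + 1) * \<bar>\<theta> i\<bar>)"
      by (rule suminf_mult[OF s])
    have "(\<Sum>i. g i) = (\<Sum>i. 5 * (if i < d then \<tau>\<^sup>2 else 0)) + (\<Sum>i. c * (real (i + 1) * \<bar>\<theta> i\<bar>)) + (\<Sum>i. if i < n then T else 0)"
      unfolding g_def
      by (subst suminf_add[symmetric], rule summable_add, rule summable_finite[of "{..<d}"], simp, simp, rule summable_mult[OF s],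
          rule summable_finite[of "{..<n}"], simp, simp, subst suminf_add[symmetric], rule summable_finite[of "{..<d}"], simp, simp, rule summable_mult[OF s], simp)
    also have "\<dots> \<le> 5 * real d * \<tau>\<^sup>2 + c + real n * T"
      unfolding e1 e2 e3 using le1 c0 by (simp add: mult_left_le)
    finally show ?thesis unfolding c_def by simp
  qed
  have "risk n (estU n \<tau>) \<theta> = (\<Sum>i. \<integral>\<^sup>+ X. ennreal ((estU n \<tau> X i - \<theta> i)\<^sup>2) \<partial>sample_dist n \<theta>)"
    unfolding risk_def
  proof (rule nn_integral_suminf)
    fix i
    have [measurable]: "(\<lambda>X. estU n \<tau> X i) \<in> borel_measurable (sample_dist n \<theta>)"
      by (rule est_meas_dist[OF estU_meas])
    show "(\<lambda>X. ennreal ((estU n \<tau> X i - \<theta> i)\<^sup>2)) \<in> borel_measurable (sample_dist n \<theta>)" by measurable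
  qed
  also have "\<dots> \<le> (\<Sum>i. ennreal (g i))"
    by (intro suminf_le per_i summableI)
  also have "\<dots> = ennreal (\<Sum>i. g i)"
    by (rule suminf_ennreal2[OF g0 sg])
  also have "\<dots> \<le> ennreal (5 * real d * \<tau>\<^sup>2 + 5 * \<tau> / real (d + 1) + real n * T)"
    by (rule ennreal_leI[OF sumg])
  finally show ?thesis unfolding T_def .
qed

lemma exp_half_le2: "exp (1/2 :: real) \<le> 2"
  using real_exp_bound_lemma[of "1/2"] by simp

lemma ln_ge1: assumes "n \<ge> (3::nat)" shows "1 \<le> ln (real n)"
proof -
  have "exp 1 \<le> real n" using exp_le assms by linarith
  then show ?thesis using assms by (subst ln_ge_iff) auto
qed

lemma upper_n:
  assumes n3: "n \<ge> 3" and \<theta>: "\<theta> \<in> Gamma_weighted"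
  shows "risk n (estU n (8 * sqrt (ln (real n) / real n))) \<theta> \<le> ennreal (684 * (ln (real n) / real n) powr (3/4))"
proof -
  define u where "u = ln (real n) / real n"
  define \<tau> where "\<tau> = 8 * sqrt u"
  define y where "y = inverse (u powr (1/4))"
  define d where "d = nat \<lceil>y\<rceil>"
  define \<mu> where "\<mu> = real n * sqrt u"
  have npos: "real n > 0" and n1: "n \<ge> 1" using n3 by auto
  have ln1: "1 \<le> ln (real n)" by (rule ln_ge1[OF n3])
  have upos: "u > 0" unfolding u_def using ln1 npos by (intro divide_pos_pos) linarith+
  have ule1: "u \<le> 1" unfolding u_def divide_le_eq_1_pos[OF npos]
    by (rule less_imp_le, rule ln_less_self[OF npos])
  have ugen: "1 / real n \<le> u" unfolding u_def using ln1 npos by (simp add: divide_right_mono)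
  have sq: "sqrt u * sqrt u = u" using upos by simp
  have \<tau>2: "\<tau>\<^sup>2 = 64 * u" unfolding \<tau>_def using upos by (simp add: power_mult_distrib)
  have \<tau>pos: "\<tau> > 0" unfolding \<tau>_def using upos by simp
  have \<mu>pos: "\<mu> > 0" unfolding \<mu>_def using upos npos by simp
  have q4: "0 < u powr (1/4)" using upos by simp
  have y1: "y \<ge> 1"
  proof -
    have a: "u powr (1/4) \<le> 1" using upos ule1 by (intro powr_le1) auto
    then show ?thesis unfolding y_def using q4 by (simp add: one_le_inverse)
  qed
  have dy: "y \<le> real d" "real d \<le> y + 1" unfolding d_def using y1 by (auto simp: of_nat_nat)
  have uu: "u powr (1/4) * u powr (3/4) = u" using powr_add[of u "1/4" "3/4", symmetric] upos by simp
  have yu: "y * u = u powr (3/4)"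
  proof -
    have "y * u = inverse (u powr (1/4)) * (u powr (1/4) * u powr (3/4))" unfolding y_def uu ..
    also have "\<dots> = u powr (3/4)" using q4 by (simp add: field_simps)
    finally show ?thesis .
  qed
  have u34: "u \<le> u powr (3/4)"
  proof -
    have "u powr 1 \<le> u powr (3/4)" by (rule powr_mono') (use upos ule1 in auto)
    then show ?thesis using upos by simp
  qed
  have su: "sqrt u * u powr (1/4) = u powr (3/4)"
  proof -
    have "sqrt u = u powr (1/2)" using upos by (simp add: powr_half_sqrt)
    then have "sqrt u * u powr (1/4) = u powr (1/2) * u powr (1/4)" by simp
    also have "\<dots> = u powr (1/2 + 1/4)" by (rule powr_add[symmetric])
    finally show ?thesis by simp
  qed
  have yinv: "1 / y = u powr (1/4)" unfolding y_def using q4 by (simp add: field_simps)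
  have h1: "16 * exp (1/2) / real n \<le> \<tau>\<^sup>2 / 2"
  proof -
    have "16 * exp (1/2) \<le> 32 * ln (real n)" using exp_half_le2 ln1 by linarith
    then have "16 * exp (1/2) / real n \<le> 32 * ln (real n) / real n" using npos by (rule divide_right_mono[OF _ less_imp_le])
    also have "32 * ln (real n) / real n = \<tau>\<^sup>2 / 2" unfolding \<tau>2 u_def by simp
    finally show ?thesis .
  qed
  have h2: "1 / real (n + 1) \<le> \<tau>"
  proof -
    have "1 / real (n + 1) \<le> 1 / real n" using npos by (intro divide_left_mono) auto
    also have "\<dots> \<le> u" by (rule ugen)
    also have "u \<le> sqrt u"
    proof -
      have "sqrt u \<le> 1" using ule1 by simp
      then have "sqrt u * sqrt u \<le> sqrt u" using upos by (intro mult_left_le_one_le) auto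
      then show ?thesis using sq by simp
    qed
    also have "\<dots> \<le> \<tau>" unfolding \<tau>_def using upos by simp
    finally show ?thesis .
  qed
  have r: "risk n (estU n \<tau>) \<theta> \<le> ennreal (5 * real d * \<tau>\<^sup>2 + 5 * \<tau> / real (d + 1)
            + real n * ((4 / \<mu>\<^sup>2) * exp (- \<mu> * (\<tau> / 2) + 2 * \<mu>\<^sup>2 / real n)))"
    by (rule risk_ub[OF n1 \<tau>pos \<mu>pos \<theta> h1 h2])
  have t1: "5 * real d * \<tau>\<^sup>2 \<le> 640 * u powr (3/4)"
  proof -
    have "5 * real d * \<tau>\<^sup>2 \<le> 5 * (y + 1) * (64 * u)" unfolding \<tau>2 using dy upos by (intro mult_right_mono mult_left_mono) auto
    also have "\<dots> = 320 * (y * u) + 320 * u" by (simp add: algebra_simps)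
    also have "\<dots> \<le> 640 * u powr (3/4)" unfolding yu using u34 by simp
    finally show ?thesis .
  qed
  have t2: "5 * \<tau> / real (d + 1) \<le> 40 * u powr (3/4)"
  proof -
    have "5 * \<tau> / real (d + 1) \<le> 5 * \<tau> / y" using dy y1 \<tau>pos by (intro divide_left_mono) auto
    also have "\<dots> = 40 * (sqrt u * (1 / y))" unfolding \<tau>_def by simp
    also have "\<dots> = 40 * u powr (3/4)" unfolding yinv su by simp
    finally show ?thesis .
  qed
  have t3: "real n * ((4 / \<mu>\<^sup>2) * exp (- \<mu> * (\<tau> / 2) + 2 * \<mu>\<^sup>2 / real n)) \<le> 4 * u powr (3/4)"
  proof -
    have "\<mu>\<^sup>2 = (real n)\<^sup>2 * u" unfolding \<mu>_def using upos by (simp add: power_mult_distrib)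
    also have "\<dots> = real n * ln (real n)" unfolding u_def using npos by (simp add: power2_eq_square)
    finally have m2: "\<mu>\<^sup>2 = real n * ln (real n)" .
    have nu: "real n * u = ln (real n)" unfolding u_def using npos by simp
    have ex: "- \<mu> * (\<tau> / 2) + 2 * \<mu>\<^sup>2 / real n = - (2 * ln (real n))"
    proof -
      have "\<mu> * (\<tau> / 2) = 4 * real n * (sqrt u * sqrt u)" unfolding \<mu>_def \<tau>_def by simp
      also have "\<dots> = 4 * ln (real n)" unfolding sq using nu by simp
      finally have a: "\<mu> * (\<tau> / 2) = 4 * ln (real n)" .
      have b: "2 * \<mu>\<^sup>2 / real n = 2 * ln (real n)" unfolding m2 using npos by simp
      show ?thesis using a b by simp
    qed
    have e2: "exp (- (2 * ln (real n))) = 1 / (real n)\<^sup>2"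
    proof -
      have "exp (2 * ln (real n)) = (real n)\<^sup>2"
        using npos ln_realpow[of "real n" 2] exp_ln[of "(real n)\<^sup>2"] by simp
      then show ?thesis by (simp add: exp_minus inverse_eq_divide)
    qed
    have "real n * ((4 / \<mu>\<^sup>2) * exp (- \<mu> * (\<tau> / 2) + 2 * \<mu>\<^sup>2 / real n)) = real n * ((4 / (real n * ln (real n))) * (1 / (real n)\<^sup>2))"
      unfolding ex unfolding e2 unfolding m2 ..
    also have "\<dots> = 4 / (ln (real n) * (real n)\<^sup>2)"
      using npos ln1 by (simp add: field_simps power2_eq_square)
    also have "\<dots> \<le> 4 / (real n)\<^sup>2"
    proof -
      have lp: "0 < ln (real n)" using ln1 by linarith
      have p: "0 < ln (real n) * (real n)\<^sup>2 * (real n)\<^sup>2" using lp npos by (intro mult_pos_pos) auto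
      have "1 * (real n)\<^sup>2 \<le> ln (real n) * (real n)\<^sup>2" using ln1 by (intro mult_right_mono) auto
      then have q: "(real n)\<^sup>2 \<le> ln (real n) * (real n)\<^sup>2" by simp
      show ?thesis by (rule divide_left_mono[OF q _ p]) simp
    qed
    also have "\<dots> \<le> 4 * u"
    proof -
      have "1 / (real n)\<^sup>2 \<le> 1 / real n" using n1 npos by (intro divide_left_mono) (auto simp: power2_eq_square)
      then show ?thesis using ugen by simp
    qed
    also have "\<dots> \<le> 4 * u powr (3/4)" using u34 by simp
    finally show ?thesis .
  qed
  show ?thesis
  proof -
    have "5 * real d * \<tau>\<^sup>2 + 5 * \<tau> / real (d + 1) + real n * ((4 / \<mu>\<^sup>2) * exp (- \<mu> * (\<tau> / 2) + 2 * \<mu>\<^sup>2 / real n))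
        \<le> 684 * u powr (3/4)" using t1 t2 t3 by linarith
    then have "risk n (estU n \<tau>) \<theta> \<le> ennreal (684 * u powr (3/4))"
      using r by (meson ennreal_leI order_trans)
    then show ?thesis unfolding \<tau>_def u_def .
  qed
qed

lemma upper_final:
  "\<forall>\<^sub>F \<epsilon> in at_right (0::real). \<exists>n. achievable Gamma_weighted \<epsilon> n \<and> real n \<le> 2 * 10^5 * \<epsilon> powr (-8/3) * ln (1/\<epsilon>)"
proof -
  have ev1: "\<forall>\<^sub>F \<epsilon> in at_right (0::real). ln (10^5 * \<epsilon> powr (-8/3) * ln (1/\<epsilon>)) \<le> 3 * ln (1/\<epsilon>)"
    by real_asymp
  have ev2: "\<forall>\<^sub>F \<epsilon> in at_right (0::real). 3 \<le> 10^5 * \<epsilon> powr (-8/3) * ln (1/\<epsilon>)"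
    by real_asymp
  have ev3: "\<forall>\<^sub>F \<epsilon> in at_right (0::real). 1 \<le> ln (1/\<epsilon>)"
    by real_asymp
  have ev4: "\<forall>\<^sub>F \<epsilon> in at_right (0::real). 0 < \<epsilon>" by (rule eventually_at_right_less)
  show ?thesis
  proof (rule eventually_mono[OF eventually_conj[OF ev1 eventually_conj[OF ev2 eventually_conj[OF ev3 ev4]]]])
    fix \<epsilon> :: real
    assume a: "ln (10^5 * \<epsilon> powr (-8/3) * ln (1/\<epsilon>)) \<le> 3 * ln (1/\<epsilon>) \<and>
      3 \<le> 10^5 * \<epsilon> powr (-8/3) * ln (1/\<epsilon>) \<and> 1 \<le> ln (1/\<epsilon>) \<and> 0 < \<epsilon>"
    define L where "L = ln (1/\<epsilon>)"
    define x where "x = 10^5 * \<epsilon> powr (-8/3) * L"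
    have lnx: "ln x \<le> 3 * L" and x3: "3 \<le> x" and L1: "1 \<le> L" and \<epsilon>: "0 < \<epsilon>"
      using a unfolding x_def L_def by auto
    define n where "n = nat \<lceil>x\<rceil>"
    have nx: "x \<le> real n" "real n \<le> x + 1" unfolding n_def using x3 by auto
    have n3: "n \<ge> 3" using nx x3 by linarith
    have npos: "real n > 0" using n3 by simp
    define w where "w = \<epsilon> powr (8/3)"
    have wpos: "w > 0" unfolding w_def using \<epsilon> by simp
    have w3: "w ^ 3 = \<epsilon> ^ 8"
    proof -
      have "w ^ 3 = \<epsilon> powr (of_nat 3 * (8/3))" unfolding w_def using \<epsilon> by (intro powr_power) auto
      also have "\<dots> = \<epsilon> ^ 8" using \<epsilon> by simp
      finally show ?thesis .
    qed
    have xw: "x = 10^5 * L / w" unfolding x_def w_def using \<epsilon> by (simp add: powr_minus_divide)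
    define u where "u = ln (real n) / real n"
    define v where "v = 3 * w / 10^5"
    have vpos: "v > 0" unfolding v_def using wpos by simp
    have upos: "0 \<le> u" unfolding u_def using n3 npos by simp
    have uv: "u \<le> v"
    proof -
      have "u \<le> ln x / x" unfolding u_def
        using exp_le x3 nx by (intro ln_x_over_x_mono) auto
      also have "\<dots> \<le> 3 * L / x" using lnx x3 by (intro divide_right_mono) auto
      also have "\<dots> = v" unfolding xw v_def using L1 wpos by (simp add: field_simps)
      finally show ?thesis .
    qed
    have key: "684 * u powr (3/4) \<le> \<epsilon>\<^sup>2"
    proof -
      have "684 * u powr (3/4) \<le> 684 * v powr (3/4)" using upos uv by (simp add: powr_mono2)
      also have "684 * v powr (3/4) \<le> \<epsilon>\<^sup>2"
      proof -
        have "(v powr (3/4)) ^ 4 = v powr (of_nat 4 * (3/4))" using vpos by (intro powr_power) auto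
        also have "\<dots> = v ^ 3" using vpos by simp
        finally have "(684 * v powr (3/4)) ^ 4 = 684 ^ 4 * v ^ 3" by (simp add: power_mult_distrib)
        also have "\<dots> = (684 ^ 4 * 27 / 10^15) * \<epsilon> ^ 8" unfolding v_def using w3 by (simp add: power_mult_distrib power_divide)
        also have "\<dots> \<le> 1 * \<epsilon> ^ 8" by (intro mult_right_mono) auto
        also have "\<dots> = (\<epsilon>\<^sup>2) ^ 4" by (simp flip: power_mult)
        finally have h4: "(684 * v powr (3/4)) ^ 4 \<le> (\<epsilon>\<^sup>2) ^ 4" .
        have s4: "(4::nat) = Suc 3" by simp
        show ?thesis by (rule power_le_imp_le_base[OF h4[unfolded s4]]) simp
      qed
      finally show ?thesis .
    qed
    have ach: "achievable Gamma_weighted \<epsilon> n"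
      unfolding achievable_def
    proof (intro exI[of _ "estU n (8 * sqrt (ln (real n) / real n))"] conjI allI ballI)
      fix i show "(\<lambda>X. estU n (8 * sqrt (ln (real n) / real n)) X i) \<in> borel_measurable (sample_space n)"
        by (rule estU_meas)
    next
      fix \<theta> assume \<theta>: "\<theta> \<in> Gamma_weighted"
      have "risk n (estU n (8 * sqrt (ln (real n) / real n))) \<theta> \<le> ennreal (684 * u powr (3/4))"
        unfolding u_def by (rule upper_n[OF n3 \<theta>])
      also have "\<dots> \<le> ennreal (\<epsilon>\<^sup>2)" by (rule ennreal_leI[OF key])
      finally show "risk n (estU n (8 * sqrt (ln (real n) / real n))) \<theta> \<le> ennreal (\<epsilon>\<^sup>2)" .
    qed
    have "real n \<le> 2 * x" using nx x3 by linarith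
    then have "real n \<le> 2 * 10^5 * \<epsilon> powr (-8/3) * ln (1/\<epsilon>)" unfolding x_def L_def by simp
    with ach show "\<exists>n. achievable Gamma_weighted \<epsilon> n \<and> real n \<le> 2 * 10^5 * \<epsilon> powr (-8/3) * ln (1/\<epsilon>)" by blast
  qed
qed

lemma lower_final:
  "\<forall>\<^sub>F \<epsilon> in at_right (0::real). \<forall>n. achievable Gamma_weighted \<epsilon> n \<longrightarrow> \<epsilon> powr (-8/3) / 131072 \<le> real n"
proof -
  have ev1: "\<forall>\<^sub>F \<epsilon> in at_right (0::real). 16 \<le> \<epsilon> powr (-2/3)" by real_asymp
  have ev2: "\<forall>\<^sub>F \<epsilon> in at_right (0::real). 0 < \<epsilon>" by (rule eventually_at_right_less)
  show ?thesis
  proof (rule eventually_mono[OF eventually_conj[OF ev1 ev2]])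
    fix \<epsilon> :: real assume a: "16 \<le> \<epsilon> powr (-2/3) \<and> 0 < \<epsilon>"
    then have \<epsilon>: "0 < \<epsilon>" and p16: "16 \<le> \<epsilon> powr (-2/3)" by auto
    define p where "p = \<epsilon> powr (-2/3)"
    define y where "y = p / 8"
    define d where "d = nat \<lfloor>y\<rfloor>"
    have y2: "2 \<le> y" unfolding y_def p_def using p16 by simp
    have dy: "real d \<le> y" "y - 1 \<le> real d" unfolding d_def using y2 by (auto simp: of_nat_floor)
    have d1: "d \<ge> 1" using dy y2 by linarith
    have p3: "p ^ 3 = 1 / \<epsilon>\<^sup>2"
    proof -
      have "p ^ 3 = \<epsilon> powr (of_nat 3 * (-2/3))" unfolding p_def using \<epsilon> by (intro powr_power) auto
      also have "\<dots> = \<epsilon> powr (- 2)" by simp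
      also have "\<dots> = 1 / \<epsilon>\<^sup>2" using \<epsilon> by (simp add: powr_minus_divide)
      finally show ?thesis .
    qed
    have p4: "p ^ 4 = \<epsilon> powr (-8/3)"
    proof -
      have "p ^ 4 = \<epsilon> powr (of_nat 4 * (-2/3))" unfolding p_def using \<epsilon> by (intro powr_power) auto
      also have "\<dots> = \<epsilon> powr (-8/3)" by simp
      finally show ?thesis .
    qed
    show "\<forall>n. achievable Gamma_weighted \<epsilon> n \<longrightarrow> \<epsilon> powr (-8/3) / 131072 \<le> real n"
    proof (intro allI impI)
      fix n assume ach: "achievable Gamma_weighted \<epsilon> n"
      have "\<not> 2 * real n \<le> real d ^ 4"
      proof
        assume dn: "2 * real n \<le> real d ^ 4"
        have "1 / (128 * real d ^ 3) \<le> \<epsilon>\<^sup>2" by (rule lower_main[OF ach d1 dn])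
        moreover have "real d ^ 3 \<le> y ^ 3" using dy d1 by (intro power_mono) auto
        moreover have "y ^ 3 = 1 / (512 * \<epsilon>\<^sup>2)" unfolding y_def using p3 by (simp add: power_divide)
        ultimately have "1 / (128 * (1 / (512 * \<epsilon>\<^sup>2))) \<le> \<epsilon>\<^sup>2"
          by (smt (verit) d1 divide_left_mono mult_le_cancel_left_pos mult_pos_pos of_nat_0_less_iff zero_less_power not_one_le_zero gr0I)
        then show False using \<epsilon> by (simp add: field_simps)
      qed
      then have "real d ^ 4 < 2 * real n" by simp
      moreover have "(y / 2) ^ 4 \<le> real d ^ 4" using dy y2 by (intro power_mono) auto
      moreover have "(y / 2) ^ 4 = \<epsilon> powr (-8/3) / 65536" unfolding y_def using p4 by (simp add: power_divide)
      ultimately show "\<epsilon> powr (-8/3) / 131072 \<le> real n" by simp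
    qed
  qed
qed


lemma main_ev:
  "\<forall>\<^sub>F \<epsilon> in at_right (0::real).
       1/131072 * \<epsilon> powr (-8/3) * ln (1/\<epsilon>) powr (-1) \<le> real (n_est Gamma_weighted \<epsilon>) \<and>
       real (n_est Gamma_weighted \<epsilon>) \<le> 2 * 10^5 * \<epsilon> powr (-8/3) * ln (1/\<epsilon>) powr 1"
proof -
  have ev3: "\<forall>\<^sub>F \<epsilon> in at_right (0::real). 1 \<le> ln (1/\<epsilon>)"
    by real_asymp
  show ?thesis
  proof (rule eventually_mono[OF eventually_conj[OF upper_final eventually_conj[OF lower_final ev3]]])
    fix \<epsilon> :: real
    assume a: "(\<exists>n. achievable Gamma_weighted \<epsilon> n \<and> real n \<le> 2 * 10^5 * \<epsilon> powr (-8/3) * ln (1/\<epsilon>)) \<and>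
      (\<forall>n. achievable Gamma_weighted \<epsilon> n \<longrightarrow> \<epsilon> powr (-8/3) / 131072 \<le> real n) \<and> 1 \<le> ln (1/\<epsilon>)"
    then obtain n where ach: "achievable Gamma_weighted \<epsilon> n" and nb: "real n \<le> 2 * 10^5 * \<epsilon> powr (-8/3) * ln (1/\<epsilon>)"
      by blast
    have lo: "\<And>m. achievable Gamma_weighted \<epsilon> m \<Longrightarrow> \<epsilon> powr (-8/3) / 131072 \<le> real m" using a by blast
    have L1: "1 \<le> ln (1/\<epsilon>)" using a by blast
    have le: "n_est Gamma_weighted \<epsilon> \<le> n" unfolding n_est_def by (rule Least_le[where P="achievable Gamma_weighted \<epsilon>", OF ach])
    have achm: "achievable Gamma_weighted \<epsilon> (n_est Gamma_weighted \<epsilon>)" unfolding n_est_def by (rule LeastI[where P="achievable Gamma_weighted \<epsilon>", OF ach])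
    have "1/131072 * \<epsilon> powr (-8/3) * ln (1/\<epsilon>) powr (-1) \<le> 1/131072 * \<epsilon> powr (-8/3) * 1"
    proof (rule mult_left_mono)
      show "ln (1/\<epsilon>) powr (-1) \<le> 1" using L1 by simp
    qed simp
    also have "\<dots> \<le> real (n_est Gamma_weighted \<epsilon>)" using lo[OF achm] by simp
    finally have A: "1/131072 * \<epsilon> powr (-8/3) * ln (1/\<epsilon>) powr (-1) \<le> real (n_est Gamma_weighted \<epsilon>)" .
    have "real (n_est Gamma_weighted \<epsilon>) \<le> real n" using le by simp
    also have "\<dots> \<le> 2 * 10^5 * \<epsilon> powr (-8/3) * ln (1/\<epsilon>) powr 1" using nb L1 by simp
    finally show "1/131072 * \<epsilon> powr (-8/3) * ln (1/\<epsilon>) powr (-1) \<le> real (n_est Gamma_weighted \<epsilon>) \<and>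
       real (n_est Gamma_weighted \<epsilon>) \<le> 2 * 10^5 * \<epsilon> powr (-8/3) * ln (1/\<epsilon>) powr 1" using A by simp
  qed
qed

theorem mainTheorem1:
  shows "\<exists>c C k. c > 0 \<and> C > 0 \<and> k \<ge> 0 \<and>
    (\<forall>\<^sub>F \<epsilon> in at_right (0::real).
       c * \<epsilon> powr (-8/3) * ln (1/\<epsilon>) powr (-k) \<le> real (n_est Gamma_weighted \<epsilon>) \<and>
       real (n_est Gamma_weighted \<epsilon>) \<le> C * \<epsilon> powr (-8/3) * ln (1/\<epsilon>) powr k)"
  apply (rule exI[of _ "1/131072"], rule exI[of _ "2 * 10^5"], rule exI[of _ 1])
  using main_ev by simp

end
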